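(* There is a ring homomorphism $\lambda\colon\mathrm{B}(\mathcal{R})\to\mathrm{B}(\mathbb{Z})$ such that for every finite connected rack $R$, $$\lambda(b(R))=\sum_{n\geq1}\lambda_n(R)\,c_n,$$ where $\lambda_n(R)$ is the number of $n$-cycles in the cycle decomposition of a left multiplication $\ell_x$ of $R$ (for any $x\in R$; this does not depend on $x$).
   Context: A rack is a set $R$ with a binary operation $\rhd$ such that every left multiplication $\ell_a\colon b\mapsto a\rhd b$ is a bijection and $a\rhd(b\rhd c)=(a\rhd b)\rhd(a\rhd c)$ for all $a,b,c$. The inner automorphism group $\mathrm{Inn}(R)$ is the subgroup of the symmetric group on $R$ generated by all $\ell_a$; a rack is connected if it is non-empty and $\mathrm{Inn}(R)$ acts transitively on $R$. A subrack is a subset $S$ with $\ell_s(S)=S$ for all $s\in S$; a decomposition of $R$ into $S$ and $T$ means $S,T$ are disjoint subracks (possibly empty) with $S\cup T=R$. The Burnside ring of finite racks $\mathrm{B}(\mathcal{R})$ is the abelian group generated by symbols $b(R)$, one for each finite rack $R$, subject to $b(R_1)=b(R_2)$ whenever $R_1\cong R_2$ and $b(R)=b(S)+b(T)$ whenever $R$ decomposes into $S$ and $T$, with ring structure $b(R)b(R')=b(R\times R')$ (cartesian product, componentwise operation). $\mathrm{B}(\mathbb{Z})$ is the Grothendieck ring of isomorphism classes of pairs $(X,\pi)$, $X$ a finite set and $\pi$ a permutation of $X$, with addition from disjoint union and multiplication from cartesian product; $c_n$ denotes the class of an $n$-cycle acting on an $n$-element set. *)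

theory Defs
  imports "HOL-Library.Poly_Mapping" "HOL-Library.Nat_Bijection" "HOL-Combinatorics.Permutations" "HOL-Combinatorics.Orbits"
begin

text \<open>A rack on the carrier set R with operation op (op a b stands for a \<rhd> b).\<close>
definition is_rack :: "'a set \<Rightarrow> ('a \<Rightarrow> 'a \<Rightarrow> 'a) \<Rightarrow> bool" where
  "is_rack R op \<longleftrightarrow>
     (\<forall>a\<in>R. bij_betw (op a) R R) \<and>
     (\<forall>a\<in>R. \<forall>b\<in>R. \<forall>c\<in>R. op a (op b c) = op (op a b) (op a c))"

text \<open>Orbit of x under Inn(R), the group generated by the left multiplications
  (as permutations of R): closure of x under all l_a and their inverses.\<close>
inductive_set inn_orbit :: "'a set \<Rightarrow> ('a \<Rightarrow> 'a \<Rightarrow> 'a) \<Rightarrow> 'a \<Rightarrow> 'a set"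
  for R op x where
  base: "x \<in> inn_orbit R op x"
| left: "a \<in> R \<Longrightarrow> y \<in> inn_orbit R op x \<Longrightarrow> op a y \<in> inn_orbit R op x"
| left_inv: "a \<in> R \<Longrightarrow> y \<in> inn_orbit R op x \<Longrightarrow> inv_into R (op a) y \<in> inn_orbit R op x"

definition connected_rack :: "'a set \<Rightarrow> ('a \<Rightarrow> 'a \<Rightarrow> 'a) \<Rightarrow> bool" where
  "connected_rack R op \<longleftrightarrow> is_rack R op \<and> R \<noteq> {} \<and>
     (\<forall>x\<in>R. \<forall>y\<in>R. y \<in> inn_orbit R op x)"

definition is_subrack :: "'a set \<Rightarrow> 'a set \<Rightarrow> ('a \<Rightarrow> 'a \<Rightarrow> 'a) \<Rightarrow> bool" where
  "is_subrack S R op \<longleftrightarrow> S \<subseteq> R \<and> (\<forall>s\<in>S. op s ` S = S)"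

definition rack_iso :: "'a set \<Rightarrow> ('a \<Rightarrow> 'a \<Rightarrow> 'a) \<Rightarrow> 'b set \<Rightarrow> ('b \<Rightarrow> 'b \<Rightarrow> 'b) \<Rightarrow> bool" where
  "rack_iso X op Y op' \<longleftrightarrow>
     (\<exists>h. bij_betw h X Y \<and> (\<forall>a\<in>X. \<forall>b\<in>X. h (op a b) = op' (h a) (h b)))"

text \<open>Finite racks with carrier a subset of nat (every finite rack is isomorphic to one).\<close>
typedef rcode = "{(X :: nat set, op :: nat \<Rightarrow> nat \<Rightarrow> nat). finite X \<and> is_rack X op}"
  by (rule exI[of _ "({}, \<lambda>a b. a)"]) (simp add: is_rack_def)

inductive_set br_rel :: "(rcode \<Rightarrow>\<^sub>0 int) set" where
  iso: "Rep_rcode A = (X, op) \<Longrightarrow> Rep_rcode B = (Y, op') \<Longrightarrow> rack_iso X op Y op' \<Longrightarrow>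
          Poly_Mapping.single A 1 - Poly_Mapping.single B 1 \<in> br_rel"
| dec: "Rep_rcode A = (X, op) \<Longrightarrow> is_subrack S X op \<Longrightarrow> is_subrack T X op \<Longrightarrow>
          S \<inter> T = {} \<Longrightarrow> S \<union> T = X \<Longrightarrow> Rep_rcode B = (S, op) \<Longrightarrow> Rep_rcode C = (T, op) \<Longrightarrow>
          Poly_Mapping.single A 1 - Poly_Mapping.single B 1 - Poly_Mapping.single C 1 \<in> br_rel"
| zero: "0 \<in> br_rel"
| diff: "u \<in> br_rel \<Longrightarrow> v \<in> br_rel \<Longrightarrow> u - v \<in> br_rel"

definition br_eq :: "(rcode \<Rightarrow>\<^sub>0 int) \<Rightarrow> (rcode \<Rightarrow>\<^sub>0 int) \<Rightarrow> bool" where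
  "br_eq u v \<longleftrightarrow> u - v \<in> br_rel"

lemma equivp_br_eq: "equivp br_eq"
proof (rule equivpI)
  show "reflp br_eq" by (rule reflpI) (simp add: br_eq_def br_rel.zero)
  show "symp br_eq"
  proof (rule sympI)
    fix x y assume "br_eq x y"
    then have "0 - (x - y) \<in> br_rel" unfolding br_eq_def by (rule br_rel.diff[OF br_rel.zero])
    then show "br_eq y x" by (simp add: br_eq_def)
  qed
  show "transp br_eq"
  proof (rule transpI)
    fix x y z assume "br_eq x y" "br_eq y z"
    then have "(x - y) - (0 - (y - z)) \<in> br_rel" unfolding br_eq_def
      by (intro br_rel.diff[of "x - y"] br_rel.diff[OF br_rel.zero])
    then show "br_eq x z" by (simp add: br_eq_def)
  qed
qed

quotient_type br = "rcode \<Rightarrow>\<^sub>0 int" / br_eq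
  by (rule equivp_br_eq)

definition rcode_prod :: "rcode \<Rightarrow> rcode \<Rightarrow> rcode" where
  "rcode_prod A B = (case Rep_rcode A of (X, op) \<Rightarrow> case Rep_rcode B of (Y, op') \<Rightarrow>
     Abs_rcode (prod_encode ` (X \<times> Y),
       \<lambda>u v. prod_encode (op (fst (prod_decode u)) (fst (prod_decode v)),
                          op' (snd (prod_decode u)) (snd (prod_decode v)))))"

definition free_mul_r :: "(rcode \<Rightarrow>\<^sub>0 int) \<Rightarrow> (rcode \<Rightarrow>\<^sub>0 int) \<Rightarrow> (rcode \<Rightarrow>\<^sub>0 int)" where
  "free_mul_r f g = (\<Sum>a\<in>Poly_Mapping.keys f. \<Sum>b\<in>Poly_Mapping.keys g.
      Poly_Mapping.single (rcode_prod a b) (Poly_Mapping.lookup f a * Poly_Mapping.lookup g b))"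

definition b_rack :: "nat set \<Rightarrow> (nat \<Rightarrow> nat \<Rightarrow> nat) \<Rightarrow> br" where
  "b_rack X op = abs_br (Poly_Mapping.single (Abs_rcode (X, op)) 1)"

instantiation br :: "{zero, one, plus, times}"
begin
definition zero_br_def: "0 = abs_br 0"
definition one_br_def: "1 = b_rack {0} (\<lambda>a b. a)"
definition plus_br_def: "x + y = abs_br (rep_br x + rep_br y)"
definition times_br_def: "x * y = abs_br (free_mul_r (rep_br x) (rep_br y))"
instance ..
end

typedef pcode = "{(X :: nat set, \<pi> :: nat \<Rightarrow> nat). finite X \<and> \<pi> permutes X}"
  by (rule exI[of _ "({}, id)"]) (simp add: permutes_id)

definition perm_iso :: "nat set \<Rightarrow> (nat \<Rightarrow> nat) \<Rightarrow> nat set \<Rightarrow> (nat \<Rightarrow> nat) \<Rightarrow> bool" where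
  "perm_iso X \<pi> Y \<sigma> \<longleftrightarrow> (\<exists>h. bij_betw h X Y \<and> (\<forall>x\<in>X. h (\<pi> x) = \<sigma> (h x)))"

inductive_set bz_rel :: "(pcode \<Rightarrow>\<^sub>0 int) set" where
  iso: "Rep_pcode A = (X, \<pi>) \<Longrightarrow> Rep_pcode B = (Y, \<sigma>) \<Longrightarrow> perm_iso X \<pi> Y \<sigma> \<Longrightarrow>
          Poly_Mapping.single A 1 - Poly_Mapping.single B 1 \<in> bz_rel"
| dec: "Rep_pcode A = (X, \<pi>) \<Longrightarrow> \<pi> ` S = S \<Longrightarrow> \<pi> ` T = T \<Longrightarrow>
          S \<inter> T = {} \<Longrightarrow> S \<union> T = X \<Longrightarrow>
          Rep_pcode B = (S, \<lambda>x. if x \<in> S then \<pi> x else x) \<Longrightarrow>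
          Rep_pcode C = (T, \<lambda>x. if x \<in> T then \<pi> x else x) \<Longrightarrow>
          Poly_Mapping.single A 1 - Poly_Mapping.single B 1 - Poly_Mapping.single C 1 \<in> bz_rel"
| zero: "0 \<in> bz_rel"
| diff: "u \<in> bz_rel \<Longrightarrow> v \<in> bz_rel \<Longrightarrow> u - v \<in> bz_rel"

definition bz_eq :: "(pcode \<Rightarrow>\<^sub>0 int) \<Rightarrow> (pcode \<Rightarrow>\<^sub>0 int) \<Rightarrow> bool" where
  "bz_eq u v \<longleftrightarrow> u - v \<in> bz_rel"

lemma equivp_bz_eq: "equivp bz_eq"
proof (rule equivpI)
  show "reflp bz_eq" by (rule reflpI) (simp add: bz_eq_def bz_rel.zero)
  show "symp bz_eq"
  proof (rule sympI)
    fix x y assume "bz_eq x y"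
    then have "0 - (x - y) \<in> bz_rel" unfolding bz_eq_def by (rule bz_rel.diff[OF bz_rel.zero])
    then show "bz_eq y x" by (simp add: bz_eq_def)
  qed
  show "transp bz_eq"
  proof (rule transpI)
    fix x y z assume "bz_eq x y" "bz_eq y z"
    then have "(x - y) - (0 - (y - z)) \<in> bz_rel" unfolding bz_eq_def
      by (intro bz_rel.diff[of "x - y"] bz_rel.diff[OF bz_rel.zero])
    then show "bz_eq x z" by (simp add: bz_eq_def)
  qed
qed

quotient_type bz = "pcode \<Rightarrow>\<^sub>0 int" / bz_eq
  by (rule equivp_bz_eq)

definition pcode_prod :: "pcode \<Rightarrow> pcode \<Rightarrow> pcode" where
  "pcode_prod A B = (case Rep_pcode A of (X, \<pi>) \<Rightarrow> case Rep_pcode B of (Y, \<sigma>) \<Rightarrow>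
     Abs_pcode (prod_encode ` (X \<times> Y),
       \<lambda>u. if u \<in> prod_encode ` (X \<times> Y)
           then prod_encode (\<pi> (fst (prod_decode u)), \<sigma> (snd (prod_decode u))) else u))"

definition free_mul_z :: "(pcode \<Rightarrow>\<^sub>0 int) \<Rightarrow> (pcode \<Rightarrow>\<^sub>0 int) \<Rightarrow> (pcode \<Rightarrow>\<^sub>0 int)" where
  "free_mul_z f g = (\<Sum>a\<in>Poly_Mapping.keys f. \<Sum>b\<in>Poly_Mapping.keys g.
      Poly_Mapping.single (pcode_prod a b) (Poly_Mapping.lookup f a * Poly_Mapping.lookup g b))"

definition b_perm :: "nat set \<Rightarrow> (nat \<Rightarrow> nat) \<Rightarrow> bz" where
  "b_perm X \<pi> = abs_bz (Poly_Mapping.single (Abs_pcode (X, \<pi>)) 1)"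

instantiation bz :: "{zero, one, plus, times}"
begin
definition zero_bz_def: "0 = abs_bz 0"
definition one_bz_def: "1 = b_perm {0} id"
definition plus_bz_def: "x + y = abs_bz (rep_bz x + rep_bz y)"
definition times_bz_def: "x * y = abs_bz (free_mul_z (rep_bz x) (rep_bz y))"
instance ..
end

definition cyc :: "nat \<Rightarrow> bz" where
  "cyc n = b_perm {0..<n} (\<lambda>i. if i < n then (i + 1) mod n else i)"

definition bz_nsmul :: "nat \<Rightarrow> bz \<Rightarrow> bz" where
  "bz_nsmul k x = (((+) x) ^^ k) 0"

primrec bz_sum :: "(nat \<Rightarrow> bz) \<Rightarrow> nat \<Rightarrow> bz" where
  "bz_sum f 0 = 0"
| "bz_sum f (Suc N) = bz_sum f N + f (Suc N)"

definition num_cycles :: "nat \<Rightarrow> ('a \<Rightarrow> 'a) \<Rightarrow> 'a set \<Rightarrow> nat" where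
  "num_cycles n f X = card {C. \<exists>y\<in>X. C = orbit f y \<and> card C = n}"

end

theory Submission
  imports Defs
begin

definition isdec :: "'a set \<Rightarrow> ('a \<Rightarrow> 'a \<Rightarrow> 'a) \<Rightarrow> 'a set \<Rightarrow> 'a set \<Rightarrow> bool" where
 "isdec X op S T \<longleftrightarrow> is_subrack S X op \<and> is_subrack T X op \<and> S \<inter> T = {} \<and> S \<union> T = X"

lemma rack_bij: "is_rack X op \<Longrightarrow> a \<in> X \<Longrightarrow> bij_betw (op a) X X"
  by (simp add: is_rack_def)
lemma rack_dist: "is_rack X op \<Longrightarrow> a\<in>X \<Longrightarrow> b\<in>X \<Longrightarrow> c\<in>X \<Longrightarrow> op a (op b c) = op (op a b) (op a c)"
  by (simp add: is_rack_def)
lemma rack_closed: "is_rack X op \<Longrightarrow> a\<in>X \<Longrightarrow> b\<in>X \<Longrightarrow> op a b \<in> X"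
  using rack_bij bij_betwE by metis
lemma rack_inj: "is_rack X op \<Longrightarrow> a\<in>X \<Longrightarrow> b\<in>X \<Longrightarrow> c\<in>X \<Longrightarrow> op a b = op a c \<Longrightarrow> b = c"
  using rack_bij bij_betw_imp_inj_on inj_onD by metis
lemma rack_img: "is_rack X op \<Longrightarrow> a\<in>X \<Longrightarrow> op a ` X = X"
  using rack_bij bij_betw_imp_surj_on by metis
lemma rack_inv_in: "is_rack X op \<Longrightarrow> a\<in>X \<Longrightarrow> y\<in>X \<Longrightarrow> inv_into X (op a) y \<in> X"
  by (metis inv_into_into rack_img)
lemma rack_inv_r: "is_rack X op \<Longrightarrow> a\<in>X \<Longrightarrow> y\<in>X \<Longrightarrow> op a (inv_into X (op a) y) = y"
  by (metis f_inv_into_f rack_img)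
lemma inv_eq: "bij_betw f A A \<Longrightarrow> x \<in> A \<Longrightarrow> f x = y \<Longrightarrow> inv_into A f y = x"
  by (metis bij_betw_imp_inj_on inv_into_f_f)

lemma inn_orbit_sub: assumes "is_rack X op" "x \<in> X" shows "inn_orbit X op x \<subseteq> X"
proof
  fix y assume "y \<in> inn_orbit X op x" then show "y \<in> X"
    by induct (auto simp: assms rack_closed rack_inv_in)
qed

lemma orbit_img: assumes "is_rack X op" "x \<in> X" "a \<in> X"
  shows "op a ` inn_orbit X op x = inn_orbit X op x"
proof
  show "op a ` inn_orbit X op x \<subseteq> inn_orbit X op x"
  proof
    fix y assume "y \<in> op a ` inn_orbit X op x"
    then obtain z where "z \<in> inn_orbit X op x" "y = op a z" by blast
    then show "y \<in> inn_orbit X op x" using inn_orbit.left[OF assms(3)] by simp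
  qed
  show "inn_orbit X op x \<subseteq> op a ` inn_orbit X op x"
  proof
    fix y assume y: "y \<in> inn_orbit X op x"
    then have yX: "y \<in> X" using subsetD[OF inn_orbit_sub[OF assms(1,2)]] by simp
    have "y = op a (inv_into X (op a) y)" using rack_inv_r[OF assms(1,3) yX] by simp
    moreover have "inv_into X (op a) y \<in> inn_orbit X op x" using inn_orbit.left_inv[OF assms(3) y] .
    ultimately show "y \<in> op a ` inn_orbit X op x" by (rule image_eqI)
  qed
qed

lemma image_compl: assumes "bij_betw f X X" "f ` S = S" "S \<subseteq> X" shows "f ` (X - S) = X - S"
proof -
  have "f ` (X - S) = f ` X - f ` S"
    by (rule inj_on_image_set_diff[OF bij_betw_imp_inj_on[OF assms(1)]]) (use assms(3) in auto)
  then show ?thesis using bij_betw_imp_surj_on[OF assms(1)] assms(2) by simp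
qed

lemma dec_preserve: assumes "is_rack X op" "isdec X op S T" "a \<in> X"
  shows "op a ` S = S" "op a ` T = T"
proof -
  have T: "T = X - S" and S: "S = X - T" using assms(2) unfolding isdec_def by auto
  have ss: "S \<subseteq> X" "T \<subseteq> X" using assms(2) unfolding isdec_def by auto
  have b: "bij_betw (op a) X X" using rack_bij assms by metis
  have "op a ` S = S \<and> op a ` T = T"
  proof (cases "a \<in> S")
    case True
    then have "op a ` S = S" using assms(2) unfolding isdec_def is_subrack_def by auto
    then show ?thesis using image_compl[OF b _ ss(1)] T by auto
  next
    case False
    then have "a \<in> T" using assms unfolding isdec_def by auto
    then have "op a ` T = T" using assms(2) unfolding isdec_def is_subrack_def by auto
    then show ?thesis using image_compl[OF b _ ss(2)] S by auto
  qed
  then show "op a ` S = S" "op a ` T = T" by auto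
qed

lemma subrack_rack: assumes "is_rack X op" "is_subrack S X op" shows "is_rack S op"
  unfolding is_rack_def
proof (intro conjI ballI)
  fix a assume a: "a \<in> S"
  have "inj_on (op a) S" using rack_bij[OF assms(1)] assms(2) a unfolding is_subrack_def
    by (meson bij_betw_imp_inj_on inj_on_subset subsetD)
  then show "bij_betw (op a) S S" using assms(2) a unfolding is_subrack_def bij_betw_def by auto
next
  fix a b c assume "a \<in> S" "b \<in> S" "c \<in> S"
  then show "op a (op b c) = op (op a b) (op a c)" using assms unfolding is_subrack_def
    by (meson rack_dist subsetD)
qed

lemma isdec_sym: "isdec X op S T \<Longrightarrow> isdec X op T S"
  unfolding isdec_def by auto

lemma dec_of_orbit: assumes "is_rack X op" "x \<in> X"
  shows "isdec X op (inn_orbit X op x) (X - inn_orbit X op x)"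
proof -
  let ?O = "inn_orbit X op x"
  have sub: "?O \<subseteq> X" using inn_orbit_sub assms by metis
  have "op a ` (X - ?O) = X - ?O" if "a \<in> X" for a
    using image_compl[OF rack_bij[OF assms(1) that] orbit_img[OF assms that] sub] .
  moreover have "op a ` ?O = ?O" if "a \<in> ?O" for a using orbit_img[OF assms] that sub by blast
  ultimately show ?thesis using sub unfolding isdec_def is_subrack_def by auto
qed

lemma exists_dec: assumes "is_rack X op" "X \<noteq> {}" "\<not> connected_rack X op"
  shows "\<exists>S T. isdec X op S T \<and> S \<noteq> {} \<and> T \<noteq> {}"
proof -
  obtain x y where xy: "x \<in> X" "y \<in> X" "y \<notin> inn_orbit X op x"
    using assms unfolding connected_rack_def by auto
  show ?thesis using dec_of_orbit[OF assms(1) xy(1)] xy inn_orbit.base[of x X op] by blast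
qed

lemma orbit_in_piece: assumes "is_rack X op" "isdec X op S T" "x \<in> S"
  shows "inn_orbit X op x \<subseteq> S"
proof
  fix y assume "y \<in> inn_orbit X op x" then show "y \<in> S"
  proof induct
    case base then show ?case using assms by simp
  next
    case (left a y) then show ?case using dec_preserve[OF assms(1,2)] by blast
  next
    case (left_inv a y)
    have "y \<in> op a ` S" using left_inv dec_preserve[OF assms(1,2)] by metis
    then obtain s where s: "s \<in> S" "y = op a s" by auto
    have "s \<in> X" using s assms(2) unfolding isdec_def by auto
    then have "inv_into X (op a) y = s" using inv_eq[OF rack_bij[OF assms(1) left_inv(1)]] s by metis
    then show ?case using s by simp
  qed
qed

lemma conn_in_piece: assumes "is_rack X op" "isdec X op S T" "connected_rack C op" "C \<subseteq> X"
  "z \<in> C" "z \<in> S"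
  shows "C \<subseteq> S"
proof -
  have rC: "is_rack C op" using assms(3) unfolding connected_rack_def by auto
  have "inn_orbit C op z \<subseteq> S"
  proof
    fix y assume "y \<in> inn_orbit C op z" then show "y \<in> S"
    proof induct
      case base then show ?case using assms by simp
    next
      case (left a y) then show ?case using dec_preserve[OF assms(1,2)] assms(4) by blast
    next
      case (left_inv a y)
      have yC: "y \<in> C" using left_inv(2) inn_orbit_sub[OF rC assms(5)] by blast
      define w where "w = inv_into C (op a) y"
      have wC: "w \<in> C" using rack_inv_in[OF rC left_inv(1) yC] w_def by simp
      have "op a w = y" using rack_inv_r[OF rC left_inv(1) yC] w_def by simp
      show ?case
      proof (rule ccontr)
        assume "inv_into C (op a) y \<notin> S"
        then have "w \<in> T" using wC assms(2,4) unfolding isdec_def w_def by auto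
        then have "y \<in> T" using \<open>op a w = y\<close> dec_preserve(2)[OF assms(1,2), of a] left_inv(1) assms(4) by blast
        then show False using left_inv(3) assms(2) unfolding isdec_def by auto
      qed
    qed
  qed
  then show ?thesis using assms(3) unfolding connected_rack_def using assms(5) by blast
qed

lemma inter_subrack: assumes "is_rack X op" "is_subrack S X op" "is_subrack S' X op"
  shows "is_subrack (S \<inter> S') X op"
  unfolding is_subrack_def
proof (intro conjI ballI)
  show "S \<inter> S' \<subseteq> X" using assms unfolding is_subrack_def by auto
  fix s assume s: "s \<in> S \<inter> S'"
  have "inj_on (op s) X" using rack_bij[OF assms(1)] s assms(2) unfolding is_subrack_def
    by (meson IntD1 bij_betw_imp_inj_on subsetD)
  then have "op s ` (S \<inter> S') = op s ` S \<inter> op s ` S'"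
    using assms unfolding is_subrack_def by (meson inj_on_image_Int)
  moreover have "op s ` S = S" "op s ` S' = S'" using s assms(2,3) unfolding is_subrack_def by auto
  ultimately show "op s ` (S \<inter> S') = S \<inter> S'" by simp
qed

lemma subrack_mono: "is_subrack A X op \<Longrightarrow> A \<subseteq> B \<Longrightarrow> is_subrack A B op"
  unfolding is_subrack_def by auto

lemma dec_inter: assumes "is_rack X op" "isdec X op S0 T0" "isdec X op S T"
  shows "isdec S0 op (S0 \<inter> S) (S0 \<inter> T)"
proof -
  have a: "is_subrack S0 X op" "is_subrack S X op" "is_subrack T X op" "S \<inter> T = {}" "S \<union> T = X" "S0 \<subseteq> X"
    using assms(2,3) unfolding isdec_def is_subrack_def by auto
  have "is_subrack (S0 \<inter> S) S0 op" by (rule subrack_mono[OF inter_subrack[OF assms(1) a(1,2)]]) auto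
  moreover have "is_subrack (S0 \<inter> T) S0 op" by (rule subrack_mono[OF inter_subrack[OF assms(1) a(1,3)]]) auto
  ultimately show ?thesis unfolding isdec_def using a(4,5,6) by blast
qed

definition rs :: "'a set \<Rightarrow> ('a \<Rightarrow> 'a) \<Rightarrow> 'a \<Rightarrow> 'a" where
  "rs X f = (\<lambda>x. if x \<in> X then f x else x)"
definition pc :: "nat set \<Rightarrow> (nat \<Rightarrow> nat) \<Rightarrow> pcode \<Rightarrow>\<^sub>0 int" where
  "pc X f = frag_of (Abs_pcode (X, rs X f))"
definition SD :: "nat set \<Rightarrow> (nat \<Rightarrow> nat \<Rightarrow> nat) \<Rightarrow> nat set \<times> nat set" where
  "SD X op = (SOME ST. isdec X op (fst ST) (snd ST) \<and> fst ST \<noteq> {} \<and> snd ST \<noteq> {})"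

lemma SD_prop: assumes "is_rack X op" "X \<noteq> {}" "\<not> connected_rack X op"
  shows "isdec X op (fst (SD X op)) (snd (SD X op)) \<and> fst (SD X op) \<noteq> {} \<and> snd (SD X op) \<noteq> {}"
proof -
  obtain S T where "isdec X op S T \<and> S \<noteq> {} \<and> T \<noteq> {}" using exists_dec[OF assms] by blast
  then have "\<exists>ST. isdec X op (fst ST) (snd ST) \<and> fst ST \<noteq> {} \<and> snd ST \<noteq> {}" by (intro exI[of _ "(S,T)"]) simp
  then show ?thesis unfolding SD_def by (rule someI_ex)
qed

lemma dec_card: assumes "finite X" "isdec X op S T" "T \<noteq> {}" shows "card S < card X"
proof -
  have "S \<subset> X" using assms unfolding isdec_def by auto
  then show ?thesis using assms(1) by (simp add: psubset_card_mono)
qed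

function Lam :: "nat set \<Rightarrow> (nat \<Rightarrow> nat \<Rightarrow> nat) \<Rightarrow> pcode \<Rightarrow>\<^sub>0 int" where
  "Lam X op = (if finite X \<and> is_rack X op \<and> X \<noteq> {} then
      (if connected_rack X op then pc X (op (SOME c. c \<in> X))
       else Lam (fst (SD X op)) op + Lam (snd (SD X op)) op) else 0)"
  by pat_completeness auto
termination
proof (relation "measure (\<lambda>(X, op). card X)")
  show "wf (measure (\<lambda>(X, op). card X))" by simp
next
  fix X :: "nat set" and op :: "nat \<Rightarrow> nat \<Rightarrow> nat" assume a: "finite X \<and> is_rack X op \<and> X \<noteq> {}" "\<not> connected_rack X op"
  note p = SD_prop[of X op] 
  have "card (fst (SD X op)) < card X" using dec_card[of X op] p a by blast
  then show "((fst (SD X op), op), X, op) \<in> measure (\<lambda>(X, op). card X)" by simp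
  have "card (snd (SD X op)) < card X" using dec_card[of X op] p a isdec_sym by blast
  then show "((snd (SD X op), op), X, op) \<in> measure (\<lambda>(X, op). card X)" by simp
qed

declare Lam.simps[simp del]

lemma Lam_empty[simp]: "Lam {} op = 0"
  by (simp add: Lam.simps)
lemma Lam_conn: "finite X \<Longrightarrow> connected_rack X op \<Longrightarrow> Lam X op = pc X (op (SOME c. c \<in> X))"
  by (simp add: Lam.simps connected_rack_def)
lemma Lam_split: "finite X \<Longrightarrow> is_rack X op \<Longrightarrow> X \<noteq> {} \<Longrightarrow> \<not> connected_rack X op \<Longrightarrow>
   Lam X op = Lam (fst (SD X op)) op + Lam (snd (SD X op)) op"
  by (simp add: Lam.simps)

lemma zrel_add: "u \<in> bz_rel \<Longrightarrow> v \<in> bz_rel \<Longrightarrow> u + v \<in> bz_rel"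
  using bz_rel.diff[of u "0 - v"] bz_rel.diff[OF bz_rel.zero, of v] by simp
lemma zrel_neg: "u \<in> bz_rel \<Longrightarrow> - u \<in> bz_rel"
  using bz_rel.diff[OF bz_rel.zero, of u] by simp
lemma zrel_sum: "finite I \<Longrightarrow> (\<And>i. i \<in> I \<Longrightarrow> f i \<in> bz_rel) \<Longrightarrow> sum f I \<in> bz_rel"
  by (induction I rule: finite_induct) (auto intro: zrel_add bz_rel.zero)
lemma zrel_cmul: "u \<in> bz_rel \<Longrightarrow> frag_cmul k u \<in> bz_rel"
  by (rule frag_closure_minus_cmul[where P = "\<lambda>x. x \<in> bz_rel"]) (auto intro: bz_rel.zero bz_rel.diff)

lemma bz_eq_refl[simp]: "bz_eq u u" by (simp add: bz_eq_def bz_rel.zero)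
lemma bz_eq_sym: "bz_eq u v \<Longrightarrow> bz_eq v u"
  unfolding bz_eq_def using zrel_neg by fastforce
lemma bz_eq_trans: "bz_eq u v \<Longrightarrow> bz_eq v w \<Longrightarrow> bz_eq u w"
  unfolding bz_eq_def using zrel_add by fastforce
lemma bz_eq_add: "bz_eq a b \<Longrightarrow> bz_eq c d \<Longrightarrow> bz_eq (a + c) (b + d)"
  unfolding bz_eq_def using zrel_add[of "a - b" "c - d"] by (simp add: algebra_simps)
lemma bz_eq_diff: "bz_eq a b \<Longrightarrow> bz_eq c d \<Longrightarrow> bz_eq (a - c) (b - d)"
  unfolding bz_eq_def using bz_rel.diff[of "a - b" "c - d"] by (simp add: algebra_simps)
lemma bz_eq_cmul: "bz_eq a b \<Longrightarrow> bz_eq (frag_cmul k a) (frag_cmul k b)"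
  unfolding bz_eq_def using zrel_cmul[of "a - b" k]
  by (metis add_diff_cancel_left' diff_add_cancel frag_cmul_distrib2)
lemma bz_eq_iff_rel: "bz_eq a b \<longleftrightarrow> a - b \<in> bz_rel" by (simp add: bz_eq_def)

lemma rs_bij: "bij_betw f X X \<Longrightarrow> bij_betw (rs X f) X X"
  by (rule bij_betw_cong[THEN iffD1, of X f]) (auto simp: rs_def)
lemma rs_permutes: "bij_betw f X X \<Longrightarrow> rs X f permutes X"
  by (rule bij_imp_permutes[OF rs_bij]) (auto simp: rs_def)
lemma pc_rep: "finite X \<Longrightarrow> bij_betw f X X \<Longrightarrow> Rep_pcode (Abs_pcode (X, rs X f)) = (X, rs X f)"
  by (rule Abs_pcode_inverse) (simp add: rs_permutes)
lemma rs_cong: "(\<And>x. x \<in> X \<Longrightarrow> f x = g x) \<Longrightarrow> rs X f = rs X g"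
  by (auto simp: rs_def)
lemma pc_cong: "(\<And>x. x \<in> X \<Longrightarrow> f x = g x) \<Longrightarrow> pc X f = pc X g"
  unfolding pc_def using rs_cong by metis

lemma perm_iso_refl: "perm_iso X f X f"
  unfolding perm_iso_def by (rule exI[of _ id]) simp
lemma perm_iso_trans: "perm_iso X f Y g \<Longrightarrow> perm_iso Y g Z k \<Longrightarrow> perm_iso X f Z k"
  unfolding perm_iso_def
proof (elim exE conjE)
  fix h1 h2 assume h: "bij_betw h1 X Y" "\<forall>x\<in>X. h1 (f x) = g (h1 x)" "bij_betw h2 Y Z" "\<forall>x\<in>Y. h2 (g x) = k (h2 x)"
  show "\<exists>h. bij_betw h X Z \<and> (\<forall>x\<in>X. h (f x) = k (h x))"
  proof (intro exI[of _ "h2 \<circ> h1"] conjI ballI)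
    show "bij_betw (h2 \<circ> h1) X Z" using h bij_betw_trans by blast
    fix x assume "x \<in> X"
    then show "(h2 \<circ> h1) (f x) = k ((h2 \<circ> h1) x)" using h bij_betwE by fastforce
  qed
qed
lemma perm_iso_sym: assumes "perm_iso X f Y g" "f ` X \<subseteq> X" shows "perm_iso Y g X f"
proof -
  obtain h where h: "bij_betw h X Y" "\<forall>x\<in>X. h (f x) = g (h x)" using assms unfolding perm_iso_def by blast
  have "bij_betw (inv_into X h) Y X" using h(1) by (rule bij_betw_inv_into)
  moreover have "inv_into X h (g y) = f (inv_into X h y)" if y: "y \<in> Y" for y
  proof -
    obtain x where x: "x \<in> X" "y = h x" using y h(1) bij_betw_imp_surj_on by blast
    have "inv_into X h y = x" using x h(1) by (simp add: bij_betw_imp_inj_on)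
    moreover have "inv_into X h (g y) = f x" using x h assms(2) by (metis bij_betw_imp_inj_on image_subset_iff inv_into_f_f)
    ultimately show ?thesis by simp
  qed
  ultimately show ?thesis unfolding perm_iso_def by blast
qed

lemma perm_iso_cong: "perm_iso X f Y g \<Longrightarrow> (\<And>x. x \<in> X \<Longrightarrow> f x = f' x) \<Longrightarrow> (\<And>y. y \<in> Y \<Longrightarrow> g y = g' y) \<Longrightarrow> perm_iso X f' Y g'"
  unfolding perm_iso_def by (metis bij_betwE)

lemma zrel_iso: assumes "finite X" "finite Y" "bij_betw f X X" "bij_betw g Y Y" "perm_iso X f Y g"
  shows "pc X f - pc Y g \<in> bz_rel"
  unfolding pc_def
proof (rule bz_rel.iso[OF pc_rep[OF assms(1,3)] pc_rep[OF assms(2,4)]])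
  show "perm_iso X (rs X f) Y (rs Y g)" using assms(5) by (rule perm_iso_cong) (auto simp: rs_def)
qed

lemma zrel_dec: assumes "finite X" "bij_betw f X X" "f ` S = S" "f ` T = T" "S \<inter> T = {}" "S \<union> T = X"
  shows "pc X f - pc S f - pc T f \<in> bz_rel"
proof -
  have bS: "bij_betw f S S" using assms unfolding bij_betw_def by (meson inj_on_subset sup_ge1)
  have bT: "bij_betw f T T" using assms unfolding bij_betw_def by (meson inj_on_subset sup_ge2)
  have fS: "finite S" "finite T" using assms(1,6) by auto
  have e1: "(\<lambda>x. if x \<in> S then rs X f x else x) = rs S f" using assms(6) by (auto simp: rs_def)
  have e2: "(\<lambda>x. if x \<in> T then rs X f x else x) = rs T f" using assms(6) by (auto simp: rs_def)
  have i1: "rs X f ` S = S" using assms(3,6) by (auto simp: rs_def)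
  have i2: "rs X f ` T = T" using assms(4,6) by (auto simp: rs_def)
  show ?thesis unfolding pc_def
    by (rule bz_rel.dec[OF pc_rep[OF assms(1,2)] i1 i2 assms(5,6)])
       (simp_all only: e1 e2 pc_rep[OF fS(1) bS] pc_rep[OF fS(2) bT])
qed

lemma pc_empty_rel: "pc {} f \<in> bz_rel"
proof -
  have "pc {} f - pc {} f - pc {} f \<in> bz_rel" by (rule zrel_dec) (auto simp: bij_betw_def)
  then show ?thesis using zrel_neg by fastforce
qed

section \<open>Conjugacy\<close>

lemma conj_step: assumes "is_rack X op" "a \<in> X" "y \<in> X" shows "perm_iso X (op y) X (op (op a y))"
  unfolding perm_iso_def
  by (rule exI[of _ "op a"]) (use assms in \<open>auto simp: rack_bij rack_dist\<close>)

lemma conj: assumes "is_rack X op" "c \<in> X" "d \<in> inn_orbit X op c"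
  shows "perm_iso X (op c) X (op d)"
  using assms(3)
proof induct
  case base then show ?case by (rule perm_iso_refl)
next
  case (left a y)
  have "y \<in> X" using left(2) inn_orbit_sub[OF assms(1,2)] by blast
  then show ?case using perm_iso_trans[OF left(3) conj_step[OF assms(1) left(1)]] by simp
next
  case (left_inv a y)
  have yX: "y \<in> X" using left_inv(2) inn_orbit_sub[OF assms(1,2)] by blast
  define y' where "y' = inv_into X (op a) y"
  have y'X: "y' \<in> X" using rack_inv_in[OF assms(1) left_inv(1) yX] y'_def by simp
  have "op a y' = y" using rack_inv_r[OF assms(1) left_inv(1) yX] y'_def by simp
  then have "perm_iso X (op y') X (op y)" using conj_step[OF assms(1) left_inv(1) y'X] by simp
  then have "perm_iso X (op y) X (op y')" by (rule perm_iso_sym) (use rack_img[OF assms(1) left_inv(1)] rack_img[OF assms(1) y'X] in simp)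
  then show ?case using perm_iso_trans[OF left_inv(3)] y'_def by simp
qed

lemma conn_no_dec: assumes "connected_rack X op" "isdec X op S T" "S \<noteq> {}" shows "T = {}"
proof -
  have r: "is_rack X op" using assms(1) unfolding connected_rack_def by simp
  obtain s where s: "s \<in> S" using assms(3) by blast
  have sX: "s \<in> X" using s assms(2) unfolding isdec_def by auto
  have "X \<subseteq> inn_orbit X op s" using assms(1) sX unfolding connected_rack_def by blast
  also have "\<dots> \<subseteq> S" by (rule orbit_in_piece[OF r assms(2) s])
  finally show ?thesis using assms(2) unfolding isdec_def by auto
qed

lemma dec_sub: "isdec X op S T \<Longrightarrow> S \<subseteq> X \<and> T \<subseteq> X"
  unfolding isdec_def by auto

lemma dec_rack: "is_rack X op \<Longrightarrow> isdec X op S T \<Longrightarrow> is_rack S op \<and> is_rack T op"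
  unfolding isdec_def using subrack_rack by blast

lemma Lam_add: assumes "finite X" "is_rack X op" "isdec X op S T"
  shows "bz_eq (Lam X op) (Lam S op + Lam T op)"
  using assms
proof (induction "card X" arbitrary: X S T rule: less_induct)
  case less
  note r = less.prems(2) and d = less.prems(3)
  have fS: "finite S" "finite T" using d less.prems(1) unfolding isdec_def by auto
  show ?case
  proof (cases "S = {} \<or> T = {}")
    case True
    then show ?thesis
    proof
      assume "S = {}" then have "T = X" using d unfolding isdec_def by auto
      then show ?thesis using \<open>S = {}\<close> by simp
    next
      assume "T = {}" then have "S = X" using d unfolding isdec_def by auto
      then show ?thesis using \<open>T = {}\<close> by simp
    qed
  next
    case False
    then have ne: "S \<noteq> {}" "T \<noteq> {}" by auto
    then have Xne: "X \<noteq> {}" using d unfolding isdec_def by auto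
    have nc: "\<not> connected_rack X op" using conn_no_dec[OF _ d ne(1)] ne(2) by blast
    define S0 where "S0 = fst (SD X op)"
    define T0 where "T0 = snd (SD X op)"
    have d0: "isdec X op S0 T0" "S0 \<noteq> {}" "T0 \<noteq> {}" using SD_prop[OF r Xne nc] S0_def T0_def by auto
    have LX: "Lam X op = Lam S0 op + Lam T0 op" using Lam_split[OF less.prems(1) r Xne nc] S0_def T0_def by simp
    have fS0: "finite S0" "finite T0" using d0 less.prems(1) unfolding isdec_def by auto
    have cS0: "card S0 < card X" using dec_card[OF less.prems(1) d0(1) d0(3)] .
    have cT0: "card T0 < card X" using dec_card[OF less.prems(1) isdec_sym[OF d0(1)] d0(2)] .
    have cS: "card S < card X" using dec_card[OF less.prems(1) d ne(2)] .
    have cT: "card T < card X" using dec_card[OF less.prems(1) isdec_sym[OF d] ne(1)] .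
    have rS0: "is_rack S0 op" "is_rack T0 op" using dec_rack[OF r d0(1)] by auto
    have rS: "is_rack S op" "is_rack T op" using dec_rack[OF r d] by auto
    have h1: "bz_eq (Lam S0 op) (Lam (S0 \<inter> S) op + Lam (S0 \<inter> T) op)"
      using less.hyps[OF cS0 fS0(1) rS0(1) dec_inter[OF r d0(1) d]] .
    have h2: "bz_eq (Lam T0 op) (Lam (T0 \<inter> S) op + Lam (T0 \<inter> T) op)"
      using less.hyps[OF cT0 fS0(2) rS0(2) dec_inter[OF r isdec_sym[OF d0(1)] d]] .
    have h3: "bz_eq (Lam S op) (Lam (S \<inter> S0) op + Lam (S \<inter> T0) op)"
      using less.hyps[OF cS fS(1) rS(1) dec_inter[OF r d d0(1)]] .
    have h4: "bz_eq (Lam T op) (Lam (T \<inter> S0) op + Lam (T \<inter> T0) op)"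
      using less.hyps[OF cT fS(2) rS(2) dec_inter[OF r isdec_sym[OF d] d0(1)]] .
    have "bz_eq (Lam X op) ((Lam (S0 \<inter> S) op + Lam (S0 \<inter> T) op) + (Lam (T0 \<inter> S) op + Lam (T0 \<inter> T) op))"
      unfolding LX by (rule bz_eq_add[OF h1 h2])
    moreover have "bz_eq ((Lam (S \<inter> S0) op + Lam (S \<inter> T0) op) + (Lam (T \<inter> S0) op + Lam (T \<inter> T0) op)) (Lam S op + Lam T op)"
      by (rule bz_eq_sym[OF bz_eq_add[OF h3 h4]])
    moreover have "(Lam (S0 \<inter> S) op + Lam (S0 \<inter> T) op) + (Lam (T0 \<inter> S) op + Lam (T0 \<inter> T) op)
       = (Lam (S \<inter> S0) op + Lam (S \<inter> T0) op) + (Lam (T \<inter> S0) op + Lam (T \<inter> T0) op)"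
      by (simp add: Int_commute algebra_simps)
    ultimately show ?thesis using bz_eq_trans by metis
  qed
qed

definition Hyp :: "nat set \<Rightarrow> (nat \<Rightarrow> nat \<Rightarrow> nat) \<Rightarrow> (nat \<Rightarrow> nat) \<Rightarrow> bool" where
  "Hyp X op \<pi> \<longleftrightarrow> (\<forall>z\<in>X. \<exists>C c. z \<in> C \<and> C \<subseteq> X \<and> connected_rack C op \<and> (\<forall>w\<in>X. op w ` C = C)
      \<and> c \<in> C \<and> (\<forall>y\<in>C. \<pi> y = op c y))"

lemma orbit_in_inv: assumes "is_rack X op" "C \<subseteq> X" "\<forall>w\<in>X. op w ` C = C" "z \<in> C"
  shows "inn_orbit X op z \<subseteq> C"
proof
  fix y assume "y \<in> inn_orbit X op z" then show "y \<in> C"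
  proof induct
    case base then show ?case using assms by simp
  next
    case (left a y) then show ?case using assms(3) by blast
  next
    case (left_inv a y)
    have "y \<in> op a ` C" using left_inv assms(3) by simp
    then obtain s where s: "s \<in> C" "y = op a s" by auto
    have "inv_into X (op a) y = s" using inv_eq[OF rack_bij[OF assms(1) left_inv(1)]] s assms(2) by blast
    then show ?case using s by simp
  qed
qed

lemma Lam_hyp: assumes "finite X" "is_rack X op" "bij_betw \<pi> X X" "Hyp X op \<pi>"
  shows "bz_eq (Lam X op) (pc X \<pi>)"
  using assms
proof (induction "card X" arbitrary: X \<pi> rule: less_induct)
  case less
  note r = less.prems(2) and H = less.prems(4)
  show ?case
  proof (cases "X = {}")
    case True
    then show ?thesis using pc_empty_rel zrel_neg by (simp add: bz_eq_def)
  next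
    case Xne: False
    show ?thesis
    proof (cases "connected_rack X op")
      case True
      define m where "m = (SOME c. c \<in> X)"
      have m: "m \<in> X" using Xne m_def by (simp add: some_in_eq)
      obtain C c where C: "m \<in> C" "C \<subseteq> X" "connected_rack C op" "\<forall>w\<in>X. op w ` C = C" "c \<in> C" "\<forall>y\<in>C. \<pi> y = op c y"
        using bspec[OF H[unfolded Hyp_def] m] by (elim exE conjE) (rule that, assumption+)
      have "X \<subseteq> inn_orbit X op m" using True m unfolding connected_rack_def by blast
      also have "\<dots> \<subseteq> C" by (rule orbit_in_inv[OF r C(2,4,1)])
      finally have XC: "X \<subseteq> C" .
      have cX: "c \<in> inn_orbit X op m" using True m C(5) C(2) unfolding connected_rack_def by blast
      have "perm_iso X (op m) X (op c)" by (rule conj[OF r m cX])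
      then have "pc X (op m) - pc X (op c) \<in> bz_rel"
        using zrel_iso less.prems(1) rack_bij[OF r] m C(5) C(2) by blast
      moreover have "pc X (op c) = pc X \<pi>" by (rule pc_cong) (use XC C(6) in auto)
      ultimately show ?thesis using Lam_conn[OF less.prems(1) True] m_def by (simp add: bz_eq_def)
    next
      case nc: False
      define S0 where "S0 = fst (SD X op)"
      define T0 where "T0 = snd (SD X op)"
      have d0: "isdec X op S0 T0" "S0 \<noteq> {}" "T0 \<noteq> {}" using SD_prop[OF r Xne nc] S0_def T0_def by auto
      have LX: "Lam X op = Lam S0 op + Lam T0 op" using Lam_split[OF less.prems(1) r Xne nc] S0_def T0_def by simp
      have fS0: "finite S0" "finite T0" using d0 less.prems(1) unfolding isdec_def by auto
      have cS0: "card S0 < card X" using dec_card[OF less.prems(1) d0(1) d0(3)] .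
      have cT0: "card T0 < card X" using dec_card[OF less.prems(1) isdec_sym[OF d0(1)] d0(2)] .
      have rS0: "is_rack S0 op" "is_rack T0 op" using dec_rack[OF r d0(1)] by auto
      have sub: "S0 \<subseteq> X" "T0 \<subseteq> X" "S0 \<inter> T0 = {}" "S0 \<union> T0 = X" using d0(1) unfolding isdec_def by auto
      have into: "\<pi> y \<in> P \<and> Hyp P op \<pi>" if dP: "isdec X op P Q" and y: "y \<in> P" for P Q y
      proof
        have PX: "P \<subseteq> X" using dP unfolding isdec_def by auto
        obtain C c where C: "y \<in> C" "C \<subseteq> X" "connected_rack C op" "\<forall>w\<in>X. op w ` C = C" "c \<in> C" "\<forall>y\<in>C. \<pi> y = op c y"
          using bspec[OF H[unfolded Hyp_def] subsetD[OF PX y]] by (elim exE conjE) (rule that, assumption+)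
        have CP: "C \<subseteq> P" by (rule conn_in_piece[OF r dP C(3) C(2) C(1) y])
        have "op c y \<in> C" using C(4) C(5) C(2) C(1) by blast
        then show "\<pi> y \<in> P" using C(6) C(1) CP by auto
        show "Hyp P op \<pi>" unfolding Hyp_def
        proof
          fix z assume z: "z \<in> P"
          obtain C c where C: "z \<in> C" "C \<subseteq> X" "connected_rack C op" "\<forall>w\<in>X. op w ` C = C" "c \<in> C" "\<forall>y\<in>C. \<pi> y = op c y"
            using bspec[OF H[unfolded Hyp_def] subsetD[OF PX z]] by (elim exE conjE) (rule that, assumption+)
          have CP: "C \<subseteq> P" by (rule conn_in_piece[OF r dP C(3) C(2) C(1) z])
          show "\<exists>C c. z \<in> C \<and> C \<subseteq> P \<and> connected_rack C op \<and> (\<forall>w\<in>P. op w ` C = C) \<and> c \<in> C \<and> (\<forall>y\<in>C. \<pi> y = op c y)"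
          proof (rule exI[of _ C], rule exI[of _ c])
            have C4: "\<forall>w\<in>P. op w ` C = C"
            proof
              fix w assume "w \<in> P" then have "w \<in> X" using PX by blast
              then show "op w ` C = C" using C(4) by simp
            qed
            show "z \<in> C \<and> C \<subseteq> P \<and> connected_rack C op \<and> (\<forall>w\<in>P. op w ` C = C) \<and> c \<in> C \<and> (\<forall>y\<in>C. \<pi> y = op c y)"
              using C(1,3,5,6) CP C4 by simp
          qed
        qed
      qed
      have stab: "\<pi> ` P = P \<and> bij_betw \<pi> P P \<and> Hyp P op \<pi>" if dP: "isdec X op P Q" for P Q
      proof -
        have PQ: "P \<subseteq> X" "Q \<subseteq> X" "P \<inter> Q = {}" "P \<union> Q = X" using dP unfolding isdec_def by auto
        have i1: "\<pi> ` P \<subseteq> P"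
        proof (rule image_subsetI)
          fix y assume "y \<in> P" then show "\<pi> y \<in> P" using into[OF dP] by simp
        qed
        have i2: "\<pi> ` Q \<subseteq> Q"
        proof (rule image_subsetI)
          fix y assume "y \<in> Q" then show "\<pi> y \<in> Q" using into[OF isdec_sym[OF dP]] by simp
        qed
        have "P \<subseteq> \<pi> ` P"
        proof
          fix p assume p: "p \<in> P"
          have "p \<in> \<pi> ` X" using p PQ(1) bij_betw_imp_surj_on[OF less.prems(3)] by auto
          then obtain x where x: "x \<in> X" "p = \<pi> x" by (rule imageE) auto
          have "x \<notin> Q"
          proof
            assume "x \<in> Q" then have "p \<in> Q" using x(2) i2 by auto
            then show False using p PQ(3) by auto
          qed
          then have "x \<in> P" using x(1) PQ(4) by auto
          then show "p \<in> \<pi> ` P" using x(2) by (rule rev_image_eqI)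
        qed
        then have e: "\<pi> ` P = P" using i1 by (rule subset_antisym[rotated])
        have "inj_on \<pi> P" using inj_on_subset[OF bij_betw_imp_inj_on[OF less.prems(3)] PQ(1)] .
        then have b: "bij_betw \<pi> P P" using e unfolding bij_betw_def by simp
        have hp: "Hyp P op \<pi>"
        proof (cases "P = {}")
          case True then show ?thesis by (simp add: Hyp_def)
        next
          case False then obtain y where "y \<in> P" by blast
          then show ?thesis using into[OF dP] by simp
        qed
        show ?thesis using e b hp by simp
      qed
      have s1: "\<pi> ` S0 = S0" "bij_betw \<pi> S0 S0" "Hyp S0 op \<pi>" using stab[OF d0(1)] by auto
      have s2: "\<pi> ` T0 = T0" "bij_betw \<pi> T0 T0" "Hyp T0 op \<pi>" using stab[OF isdec_sym[OF d0(1)]] by auto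
      have h1: "bz_eq (Lam S0 op) (pc S0 \<pi>)" using less.hyps[OF cS0 fS0(1) rS0(1) s1(2,3)] .
      have h2: "bz_eq (Lam T0 op) (pc T0 \<pi>)" using less.hyps[OF cT0 fS0(2) rS0(2) s2(2,3)] .
      have "pc X \<pi> - pc S0 \<pi> - pc T0 \<pi> \<in> bz_rel"
        by (rule zrel_dec[OF less.prems(1,3) s1(1) s2(1) sub(3,4)])
      then have "bz_eq (pc S0 \<pi> + pc T0 \<pi>) (pc X \<pi>)"
        using zrel_neg unfolding bz_eq_def by (fastforce simp: algebra_simps)
      then show ?thesis unfolding LX using bz_eq_add[OF h1 h2] bz_eq_trans by blast
    qed
  qed
qed

locale rhom =
  fixes X :: "'a set" and op and Y :: "'b set" and op' and h
  assumes rX: "is_rack X op" and rY: "is_rack Y op'" and hb: "bij_betw h X Y"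
    and hh: "\<And>a b. a \<in> X \<Longrightarrow> b \<in> X \<Longrightarrow> h (op a b) = op' (h a) (h b)"
begin

lemma hX: "x \<in> X \<Longrightarrow> h x \<in> Y" using hb bij_betwE by blast

lemma h_inv: assumes "a \<in> X" "y \<in> X" shows "h (inv_into X (op a) y) = inv_into Y (op' (h a)) (h y)"
proof -
  define w where "w = inv_into X (op a) y"
  have w: "w \<in> X" "op a w = y" using rack_inv_in[OF rX assms] rack_inv_r[OF rX assms] w_def by auto
  have "op' (h a) (h w) = h y" using hh[OF assms(1) w(1)] w(2) by simp
  then have "inv_into Y (op' (h a)) (h y) = h w" using inv_eq[OF rack_bij[OF rY hX[OF assms(1)]] hX[OF w(1)]] by simp
  then show ?thesis using w_def by simp
qed

lemma h_orbit: assumes "x \<in> X" "y \<in> inn_orbit X op x" shows "h y \<in> inn_orbit Y op' (h x)"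
  using assms(2)
proof induct
  case base then show ?case by (rule inn_orbit.base)
next
  case (left a y)
  have "y \<in> X" using left(2) inn_orbit_sub[OF rX assms(1)] by blast
  then have "h (op a y) = op' (h a) (h y)" using hh left(1) by simp
  then show ?case using inn_orbit.left[OF hX[OF left(1)] left(3)] by simp
next
  case (left_inv a y)
  have "y \<in> X" using left_inv(2) inn_orbit_sub[OF rX assms(1)] by blast
  then have "h (inv_into X (op a) y) = inv_into Y (op' (h a)) (h y)" using h_inv left_inv(1) by simp
  then show ?case using inn_orbit.left_inv[OF hX[OF left_inv(1)] left_inv(3)] by simp
qed

lemma h_conn: assumes "connected_rack X op" shows "connected_rack Y op'"
  unfolding connected_rack_def
proof (intro conjI ballI)
  show "is_rack Y op'" by (rule rY)
  show "Y \<noteq> {}" using assms hb unfolding connected_rack_def bij_betw_def by auto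
  fix y1 y2 assume y: "y1 \<in> Y" "y2 \<in> Y"
  obtain x1 where x1: "x1 \<in> X" "y1 = h x1" using y(1) hb bij_betw_imp_surj_on by (metis imageE)
  obtain x2 where x2: "x2 \<in> X" "y2 = h x2" using y(2) hb bij_betw_imp_surj_on by (metis imageE)
  have "x2 \<in> inn_orbit X op x1" using assms x1 x2 unfolding connected_rack_def by blast
  then show "y2 \<in> inn_orbit Y op' y1" using h_orbit[OF x1(1)] x1 x2 by simp
qed

lemma h_sub: assumes "is_subrack S X op" shows "is_subrack (h ` S) Y op'"
  unfolding is_subrack_def
proof (intro conjI ballI)
  have SX: "S \<subseteq> X" using assms unfolding is_subrack_def by simp
  then show "h ` S \<subseteq> Y" using hb bij_betw_imp_surj_on by blast
  fix t assume "t \<in> h ` S"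
  then obtain s where s: "s \<in> S" "t = h s" by blast
  have "op' (h s) ` h ` S = h ` op s ` S"
  proof -
    have "op' (h s) ` h ` S = (\<lambda>x. op' (h s) (h x)) ` S" by (simp add: image_image)
    also have "\<dots> = (\<lambda>x. h (op s x)) ` S" using hh s(1) SX by (intro image_cong) (auto simp: subsetD)
    also have "\<dots> = h ` op s ` S" by (simp add: image_image)
    finally show ?thesis .
  qed
  also have "\<dots> = h ` S" using assms s(1) unfolding is_subrack_def by simp
  finally show "op' t ` h ` S = h ` S" using s by simp
qed

lemma h_dec: assumes "isdec X op S T" shows "isdec Y op' (h ` S) (h ` T)"
proof -
  have a: "is_subrack S X op" "is_subrack T X op" "S \<inter> T = {}" "S \<union> T = X" using assms unfolding isdec_def by auto
  have "h ` S \<inter> h ` T = {}"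
    using a(3,4) bij_betw_imp_inj_on[OF hb] by (metis Un_upper1 Un_upper2 image_empty inj_on_image_Int)
  moreover have "h ` S \<union> h ` T = Y" using a(4) bij_betw_imp_surj_on[OF hb] by (simp add: image_Un[symmetric])
  ultimately show ?thesis using h_sub a(1,2) unfolding isdec_def by simp
qed

end

lemma rhom_restrict: assumes "rhom X op Y op' h" "is_subrack S X op"
  shows "rhom S op (h ` S) op' h"
proof -
  interpret rhom X op Y op' h by (rule assms(1))
  have SX: "S \<subseteq> X" using assms(2) unfolding is_subrack_def by simp
  show ?thesis
  proof
    show "is_rack S op" by (rule subrack_rack[OF rX assms(2)])
    show "is_rack (h ` S) op'" by (rule subrack_rack[OF rY h_sub[OF assms(2)]])
    show "bij_betw h S (h ` S)" using inj_on_subset[OF bij_betw_imp_inj_on[OF hb] SX] by (simp add: inj_on_imp_bij_betw)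
    fix a b assume "a \<in> S" "b \<in> S" then show "h (op a b) = op' (h a) (h b)" using hh SX by blast
  qed
qed

lemma Lam_iso: assumes "finite X" "rhom X op Y op' h"
  shows "bz_eq (Lam X op) (Lam Y op')"
  using assms
proof (induction "card X" arbitrary: X Y h rule: less_induct)
  case less
  interpret rhom X op Y op' h by (rule less.prems(2))
  have fY: "finite Y" using less.prems(1) hb bij_betw_finite by blast
  show ?case
  proof (cases "X = {}")
    case True
    then have "Y = {}" using hb by (simp add: bij_betw_def)
    then show ?thesis using True by simp
  next
    case Xne: False
    show ?thesis
    proof (cases "connected_rack X op")
      case True
      have cY: "connected_rack Y op'" by (rule h_conn[OF True])
      define m where "m = (SOME c. c \<in> X)"
      have m: "m \<in> X" using Xne m_def by (simp add: some_in_eq)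
      have Yne: "Y \<noteq> {}" using cY unfolding connected_rack_def by simp
      define m' where "m' = (SOME c. c \<in> Y)"
      have m': "m' \<in> Y" using Yne m'_def by (simp add: some_in_eq)
      have i1: "perm_iso X (op m) Y (op' (h m))"
        unfolding perm_iso_def using hb hh m by blast
      have "m' \<in> inn_orbit Y op' (h m)" using cY m' hX[OF m] unfolding connected_rack_def by blast
      then have i2: "perm_iso Y (op' (h m)) Y (op' m')" by (rule conj[OF rY hX[OF m]])
      have "pc X (op m) - pc Y (op' m') \<in> bz_rel"
        by (rule zrel_iso[OF less.prems(1) fY rack_bij[OF rX m] rack_bij[OF rY m'] perm_iso_trans[OF i1 i2]])
      then show ?thesis using Lam_conn[OF less.prems(1) True] Lam_conn[OF fY cY] m_def m'_def by (simp add: bz_eq_def)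
    next
      case nc: False
      define S0 where "S0 = fst (SD X op)"
      define T0 where "T0 = snd (SD X op)"
      have d0: "isdec X op S0 T0" "S0 \<noteq> {}" "T0 \<noteq> {}" using SD_prop[OF rX Xne nc] S0_def T0_def by auto
      have LX: "Lam X op = Lam S0 op + Lam T0 op" using Lam_split[OF less.prems(1) rX Xne nc] S0_def T0_def by simp
      have fS0: "finite S0" "finite T0" using d0 less.prems(1) unfolding isdec_def by auto
      have cS0: "card S0 < card X" using dec_card[OF less.prems(1) d0(1) d0(3)] .
      have cT0: "card T0 < card X" using dec_card[OF less.prems(1) isdec_sym[OF d0(1)] d0(2)] .
      have sr: "is_subrack S0 X op" "is_subrack T0 X op" using d0(1) unfolding isdec_def by auto
      have h1: "bz_eq (Lam S0 op) (Lam (h ` S0) op')"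
        by (rule less.hyps[OF cS0 fS0(1) rhom_restrict[OF less.prems(2) sr(1)]])
      have h2: "bz_eq (Lam T0 op) (Lam (h ` T0) op')"
        by (rule less.hyps[OF cT0 fS0(2) rhom_restrict[OF less.prems(2) sr(2)]])
      have "bz_eq (Lam Y op') (Lam (h ` S0) op' + Lam (h ` T0) op')"
        by (rule Lam_add[OF fY rY h_dec[OF d0(1)]])
      then show ?thesis unfolding LX using bz_eq_add[OF h1 h2] bz_eq_trans bz_eq_sym by blast
    qed
  qed
qed

definition pset :: "nat set \<Rightarrow> nat set \<Rightarrow> nat set" where
  "pset X Y = prod_encode ` (X \<times> Y)"
definition pmap :: "(nat \<Rightarrow> nat) \<Rightarrow> (nat \<Rightarrow> nat) \<Rightarrow> nat \<Rightarrow> nat" where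
  "pmap f g = (\<lambda>u. prod_encode (f (fst (prod_decode u)), g (snd (prod_decode u))))"
definition pop :: "(nat \<Rightarrow> nat \<Rightarrow> nat) \<Rightarrow> (nat \<Rightarrow> nat \<Rightarrow> nat) \<Rightarrow> nat \<Rightarrow> nat \<Rightarrow> nat" where
  "pop op op' = (\<lambda>u v. prod_encode (op (fst (prod_decode u)) (fst (prod_decode v)),
                          op' (snd (prod_decode u)) (snd (prod_decode v))))"

lemma pmap_enc[simp]: "pmap f g (prod_encode (a, b)) = prod_encode (f a, g b)"
  by (simp add: pmap_def)
lemma pop_enc[simp]: "pop op op' (prod_encode (a, b)) (prod_encode (c, d)) = prod_encode (op a c, op' b d)"
  by (simp add: pop_def)
lemma pset_enc[simp]: "prod_encode (a, b) \<in> pset X Y \<longleftrightarrow> a \<in> X \<and> b \<in> Y"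
  by (auto simp: pset_def)
lemma pset_cases: assumes "u \<in> pset X Y" obtains a b where "a \<in> X" "b \<in> Y" "u = prod_encode (a, b)"
  using assms unfolding pset_def by blast
lemma pset_dec: "u \<in> pset X Y \<Longrightarrow> fst (prod_decode u) \<in> X \<and> snd (prod_decode u) \<in> Y"
  by (auto simp: pset_def)
lemma finite_pset: "finite X \<Longrightarrow> finite Y \<Longrightarrow> finite (pset X Y)"
  by (simp add: pset_def)
lemma pset_empty1[simp]: "pset {} Y = {}" by (simp add: pset_def)
lemma pset_empty2[simp]: "pset X {} = {}" by (simp add: pset_def)

lemma pop_pmap: "pop op op' (prod_encode (a, b)) = pmap (op a) (op' b)"
  by (simp add: pop_def pmap_def fun_eq_iff)

lemma prod_map_bij: assumes "bij_betw f X X" "bij_betw g Y Y"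
  shows "bij_betw (pmap f g) (pset X Y) (pset X Y)"
  unfolding bij_betw_def
proof
  show "inj_on (pmap f g) (pset X Y)"
  proof (rule inj_onI)
    fix u v assume u: "u \<in> pset X Y" and v: "v \<in> pset X Y" and e: "pmap f g u = pmap f g v"
    obtain a b where ab: "a \<in> X" "b \<in> Y" "u = prod_encode (a, b)" using u by (rule pset_cases)
    obtain c d where cd: "c \<in> X" "d \<in> Y" "v = prod_encode (c, d)" using v by (rule pset_cases)
    have "f a = f c" "g b = g d" using e ab cd by auto
    then have "a = c" "b = d" using ab cd assms by (meson bij_betw_imp_inj_on inj_onD)+
    then show "u = v" using ab cd by simp
  qed
  show "pmap f g ` pset X Y = pset X Y"
  proof
    show "pmap f g ` pset X Y \<subseteq> pset X Y"
    proof
      fix w assume "w \<in> pmap f g ` pset X Y"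
      then obtain u where u: "u \<in> pset X Y" "w = pmap f g u" by blast
      obtain a b where ab: "a \<in> X" "b \<in> Y" "u = prod_encode (a, b)" using u(1) by (rule pset_cases)
      show "w \<in> pset X Y" using u ab assms by (auto simp: bij_betwE)
    qed
    show "pset X Y \<subseteq> pmap f g ` pset X Y"
    proof
      fix w assume "w \<in> pset X Y"
      then obtain a b where ab: "a \<in> X" "b \<in> Y" "w = prod_encode (a, b)" by (rule pset_cases)
      obtain a0 where a0: "a0 \<in> X" "a = f a0" using ab(1) assms(1) bij_betw_imp_surj_on by (metis imageE)
      obtain b0 where b0: "b0 \<in> Y" "b = g b0" using ab(2) assms(2) bij_betw_imp_surj_on by (metis imageE)
      have "w = pmap f g (prod_encode (a0, b0))" using ab a0 b0 by simp
      moreover have "prod_encode (a0, b0) \<in> pset X Y" using a0 b0 by simp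
      ultimately show "w \<in> pmap f g ` pset X Y" by blast
    qed
  qed
qed

lemma prod_rack: assumes rX: "is_rack X op" and rY: "is_rack Y op'"
  shows "is_rack (pset X Y) (pop op op')"
  unfolding is_rack_def
proof (intro conjI ballI)
  fix w assume "w \<in> pset X Y"
  then obtain a b where ab: "a \<in> X" "b \<in> Y" "w = prod_encode (a, b)" by (rule pset_cases)
  show "bij_betw (pop op op' w) (pset X Y) (pset X Y)"
    unfolding ab(3) pop_pmap by (rule prod_map_bij[OF rack_bij[OF rX ab(1)] rack_bij[OF rY ab(2)]])
next
  fix u v w assume u: "u \<in> pset X Y" and v: "v \<in> pset X Y" and w: "w \<in> pset X Y"
  obtain a b where ab: "a \<in> X" "b \<in> Y" "u = prod_encode (a, b)" using u by (rule pset_cases)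
  obtain c d where cd: "c \<in> X" "d \<in> Y" "v = prod_encode (c, d)" using v by (rule pset_cases)
  obtain e f where ef: "e \<in> X" "f \<in> Y" "w = prod_encode (e, f)" using w by (rule pset_cases)
  show "pop op op' u (pop op op' v w) = pop op op' (pop op op' u v) (pop op op' u w)"
    using ab cd ef rack_dist[OF rX] rack_dist[OF rY] by simp
qed

lemma rcode_prod_rep: assumes "Rep_rcode A = (X, op)" "Rep_rcode B = (Y, op')"
  shows "Rep_rcode (rcode_prod A B) = (pset X Y, pop op op')"
proof -
  have a: "finite X" "is_rack X op" using Rep_rcode[of A] assms(1) by auto
  have b: "finite Y" "is_rack Y op'" using Rep_rcode[of B] assms(2) by auto
  have "rcode_prod A B = Abs_rcode (pset X Y, pop op op')"
    unfolding rcode_prod_def assms pset_def pop_def by simp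
  then show ?thesis
    by (simp add: Abs_rcode_inverse finite_pset a b prod_rack)
qed

lemma rack_self: assumes "is_rack X op" "a \<in> X" "z \<in> X" shows "op (op a a) z = op a z"
proof -
  define z' where "z' = inv_into X (op a) z"
  have z': "z' \<in> X" "op a z' = z" using rack_inv_in[OF assms] rack_inv_r[OF assms] z'_def by auto
  have "op (op a a) (op a z') = op a (op a z')" using rack_dist[OF assms(1,2,2) z'(1)] by simp
  then show ?thesis using z' by simp
qed

lemma rack_self_inv: assumes "is_rack X op" "a \<in> X" "z \<in> X"
  shows "op (inv_into X (op a) a) z = op a z"
proof -
  define t where "t = inv_into X (op a) a"
  have t: "t \<in> X" "op a t = a" using rack_inv_in[OF assms(1,2,2)] rack_inv_r[OF assms(1,2,2)] t_def by auto
  have "op a (op t z) = op (op a t) (op a z)" using rack_dist[OF assms(1,2) t(1) assms(3)] .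
  then have "op a (op t z) = op a (op a z)" using t by simp
  then have "op t z = op a z"
    using rack_inj[OF assms(1,2) rack_closed[OF assms(1) t(1) assms(3)] rack_closed[OF assms(1,2,3)]] by simp
  then show ?thesis using t_def by simp
qed

lemma orbit_trans: assumes "y1 \<in> inn_orbit X op z" "y2 \<in> inn_orbit X op y1" shows "y2 \<in> inn_orbit X op z"
  using assms(2)
proof induct
  case base then show ?case using assms(1) .
next
  case (left a y) then show ?case using inn_orbit.left by metis
next
  case (left_inv a y) then show ?case using inn_orbit.left_inv by metis
qed

lemma orbit_sym: assumes r: "is_rack X op" and z: "z \<in> X" and y: "y1 \<in> inn_orbit X op z"
  shows "z \<in> inn_orbit X op y1"
  using y
proof induct
  case base then show ?case by (rule inn_orbit.base)
next
  case (left a y)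
  have yX: "y \<in> X" using left(2) inn_orbit_sub[OF r z] by blast
  have "inv_into X (op a) (op a y) \<in> inn_orbit X op (op a y)"
    by (rule inn_orbit.left_inv[OF left(1) inn_orbit.base])
  moreover have "inv_into X (op a) (op a y) = y" using inv_eq[OF rack_bij[OF r left(1)] yX] by simp
  ultimately have "y \<in> inn_orbit X op (op a y)" by simp
  then show ?case using orbit_trans[OF _ left(3)] by simp
next
  case (left_inv a y)
  have yX: "y \<in> X" using left_inv(2) inn_orbit_sub[OF r z] by blast
  have "op a (inv_into X (op a) y) \<in> inn_orbit X op (inv_into X (op a) y)"
    by (rule inn_orbit.left[OF left_inv(1) inn_orbit.base])
  then have "y \<in> inn_orbit X op (inv_into X (op a) y)" using rack_inv_r[OF r left_inv(1) yX] by simp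
  then show ?case using orbit_trans[OF _ left_inv(3)] by simp
qed

locale prodr =
  fixes X :: "nat set" and op and Y :: "nat set" and op'
  assumes cX: "connected_rack X op" and cY: "connected_rack Y op'"
begin

abbreviation "PS \<equiv> pset X Y"
abbreviation "Op \<equiv> pop op op'"

lemma rX: "is_rack X op" using cX unfolding connected_rack_def by simp
lemma rY: "is_rack Y op'" using cY unfolding connected_rack_def by simp
lemma rP: "is_rack PS Op" by (rule prod_rack[OF rX rY])

lemma pinv: assumes "a \<in> X" "b \<in> Y" "c \<in> X" "d \<in> Y"
  shows "inv_into PS (Op (prod_encode (a, b))) (prod_encode (c, d))
     = prod_encode (inv_into X (op a) c, inv_into Y (op' b) d)"
proof (rule inv_eq)
  show "bij_betw (Op (prod_encode (a, b))) PS PS" using rack_bij[OF rP] assms by simp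
  show "prod_encode (inv_into X (op a) c, inv_into Y (op' b) d) \<in> PS"
    using rack_inv_in[OF rX] rack_inv_in[OF rY] assms by simp
  show "Op (prod_encode (a, b)) (prod_encode (inv_into X (op a) c, inv_into Y (op' b) d)) = prod_encode (c, d)"
    using rack_inv_r[OF rX] rack_inv_r[OF rY] assms by simp
qed

lemma step1: assumes x: "x \<in> X" and y: "y \<in> Y" and u: "u' \<in> inn_orbit X op x"
  shows "\<exists>y'\<in>Y. prod_encode (u', y') \<in> inn_orbit PS Op (prod_encode (x, y))"
  using u
proof induct
  case base then show ?case by (rule bexI[where x=y]) (simp_all add: y inn_orbit.base)
next
  case (left a u)
  then obtain y' where y': "y' \<in> Y" "prod_encode (u, y') \<in> inn_orbit PS Op (prod_encode (x, y))" by blast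
  have w: "prod_encode (a, y) \<in> PS" using left(1) y by simp
  have "Op (prod_encode (a, y)) (prod_encode (u, y')) \<in> inn_orbit PS Op (prod_encode (x, y))"
    by (rule inn_orbit.left[OF w y'(2)])
  then show ?case using rack_closed[OF rY y y'(1)] by auto
next
  case (left_inv a u)
  then obtain y' where y': "y' \<in> Y" "prod_encode (u, y') \<in> inn_orbit PS Op (prod_encode (x, y))" by blast
  have uX: "u \<in> X" using left_inv(2) inn_orbit_sub[OF rX x] by blast
  have w: "prod_encode (a, y) \<in> PS" using left_inv(1) y by simp
  have "inv_into PS (Op (prod_encode (a, y))) (prod_encode (u, y')) \<in> inn_orbit PS Op (prod_encode (x, y))"
    by (rule inn_orbit.left_inv[OF w y'(2)])
  then show ?case using pinv[OF left_inv(1) y uX y'(1)] rack_inv_in[OF rY y y'(1)] by auto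
qed

lemma step2: assumes u1: "u1 \<in> X" and y1: "y1 \<in> Y" and p: "p \<in> PS"
  and inp: "prod_encode (u1, y1) \<in> inn_orbit PS Op p" and v: "v' \<in> inn_orbit Y op' y1"
  shows "\<exists>u'\<in>X. (\<forall>z\<in>X. op u' z = op u1 z) \<and> prod_encode (u', v') \<in> inn_orbit PS Op p"
  using v
proof induct
  case base then show ?case using u1 inp by blast
next
  case (left b v)
  then obtain u' where u': "u' \<in> X" "\<forall>z\<in>X. op u' z = op u1 z" "prod_encode (u', v) \<in> inn_orbit PS Op p" by blast
  have vY: "v \<in> Y" using left(2) inn_orbit_sub[OF rY y1] by blast
  have w: "prod_encode (u', b) \<in> PS" using left(1) u' by simp
  have "Op (prod_encode (u', b)) (prod_encode (u', v)) \<in> inn_orbit PS Op p" by (rule inn_orbit.left[OF w u'(3)])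
  then have "prod_encode (op u' u', op' b v) \<in> inn_orbit PS Op p" by simp
  moreover have "op u' u' \<in> X" using rack_closed[OF rX u'(1) u'(1)] .
  moreover have "\<forall>z\<in>X. op (op u' u') z = op u1 z" using rack_self[OF rX u'(1)] u'(2) by simp
  ultimately show ?case by blast
next
  case (left_inv b v)
  then obtain u' where u': "u' \<in> X" "\<forall>z\<in>X. op u' z = op u1 z" "prod_encode (u', v) \<in> inn_orbit PS Op p" by blast
  have vY: "v \<in> Y" using left_inv(2) inn_orbit_sub[OF rY y1] by blast
  have w: "prod_encode (u', b) \<in> PS" using left_inv(1) u' by simp
  have "inv_into PS (Op (prod_encode (u', b))) (prod_encode (u', v)) \<in> inn_orbit PS Op p"
    by (rule inn_orbit.left_inv[OF w u'(3)])
  then have "prod_encode (inv_into X (op u') u', inv_into Y (op' b) v) \<in> inn_orbit PS Op p"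
    using pinv[OF u'(1) left_inv(1) u'(1) vY] by simp
  moreover have "inv_into X (op u') u' \<in> X" using rack_inv_in[OF rX u'(1) u'(1)] .
  moreover have "\<forall>z\<in>X. op (inv_into X (op u') u') z = op u1 z" using rack_self_inv[OF rX u'(1)] u'(2) by simp
  ultimately show ?case by blast
qed

lemma fact: assumes p: "p \<in> PS" and q: "q \<in> PS"
  shows "\<exists>s \<in> inn_orbit PS Op p. \<forall>y\<in>PS. Op s y = Op q y"
proof -
  obtain x y where xy: "x \<in> X" "y \<in> Y" "p = prod_encode (x, y)" using p by (rule pset_cases)
  obtain u v where uv: "u \<in> X" "v \<in> Y" "q = prod_encode (u, v)" using q by (rule pset_cases)
  have "u \<in> inn_orbit X op x" using cX xy(1) uv(1) unfolding connected_rack_def by blast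
  then obtain y1 where y1: "y1 \<in> Y" "prod_encode (u, y1) \<in> inn_orbit PS Op p" using step1[OF xy(1,2)] xy(3) by blast
  have "v \<in> inn_orbit Y op' y1" using cY y1(1) uv(2) unfolding connected_rack_def by blast
  then obtain u' where u': "u' \<in> X" "\<forall>z\<in>X. op u' z = op u z" "prod_encode (u', v) \<in> inn_orbit PS Op p"
    using step2[OF uv(1) y1(1) p y1(2)] by blast
  have "\<forall>w\<in>PS. Op (prod_encode (u', v)) w = Op q w"
  proof
    fix w assume "w \<in> PS"
    then obtain c d where cd: "c \<in> X" "d \<in> Y" "w = prod_encode (c, d)" by (rule pset_cases)
    show "Op (prod_encode (u', v)) w = Op q w" using cd uv u'(2) by simp
  qed
  then show ?thesis using u'(3) by blast
qed

lemma orbit_conn: assumes z: "z \<in> PS"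
  shows "connected_rack (inn_orbit PS Op z) Op"
proof -
  let ?C = "inn_orbit PS Op z"
  have CP: "?C \<subseteq> PS" by (rule inn_orbit_sub[OF rP z])
  have img: "Op w ` ?C = ?C" if "w \<in> PS" for w by (rule orbit_img[OF rP z that])
  have sub: "is_subrack ?C PS Op" unfolding is_subrack_def using CP img by blast
  have rC: "is_rack ?C Op" by (rule subrack_rack[OF rP sub])
  have "y2 \<in> inn_orbit ?C Op y1" if y1: "y1 \<in> ?C" and y2: "y2 \<in> ?C" for y1 y2
  proof -
    have y1P: "y1 \<in> PS" using y1 CP by blast
    have "z \<in> inn_orbit PS Op y1" by (rule orbit_sym[OF rP z y1])
    then have y2': "y2 \<in> inn_orbit PS Op y1" using orbit_trans[OF _ y2] by simp
    have o1: "inn_orbit PS Op y1 \<subseteq> ?C" using orbit_trans[OF y1] by (rule subsetI)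
    have "inn_orbit PS Op y1 \<subseteq> inn_orbit ?C Op y1"
    proof
      fix t assume "t \<in> inn_orbit PS Op y1" then show "t \<in> inn_orbit ?C Op y1"
      proof induct
        case base then show ?case by (rule inn_orbit.base)
      next
        case (left a t)
        obtain s where s: "s \<in> inn_orbit PS Op y1" "\<forall>y\<in>PS. Op s y = Op a y" using fact[OF y1P left(1)] by blast
        have sC: "s \<in> ?C" using s(1) o1 by blast
        have tP: "t \<in> PS" using left(2) inn_orbit_sub[OF rP y1P] by blast
        have "Op s t \<in> inn_orbit ?C Op y1" by (rule inn_orbit.left[OF sC left(3)])
        then show ?case using s(2) tP by simp
      next
        case (left_inv a t)
        obtain s where s: "s \<in> inn_orbit PS Op y1" "\<forall>y\<in>PS. Op s y = Op a y" using fact[OF y1P left_inv(1)] by blast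
        have sC: "s \<in> ?C" using s(1) o1 by blast
        have tC: "t \<in> ?C" using left_inv(3) inn_orbit_sub[OF rC y1] by blast
        define r where "r = inv_into ?C (Op s) t"
        have r: "r \<in> ?C" "Op s r = t" using rack_inv_in[OF rC sC tC] rack_inv_r[OF rC sC tC] r_def by auto
        have "Op a r = t" using r s(2) CP by auto
        then have "inv_into PS (Op a) t = r" using inv_eq[OF rack_bij[OF rP left_inv(1)]] r(1) CP by blast
        moreover have "inv_into ?C (Op s) t \<in> inn_orbit ?C Op y1" by (rule inn_orbit.left_inv[OF sC left_inv(3)])
        ultimately show ?case using r_def by simp
      qed
    qed
    then show ?thesis using y2' by blast
  qed
  moreover have "z \<in> ?C" by (rule inn_orbit.base)
  then have "?C \<noteq> {}" by blast
  ultimately show ?thesis unfolding connected_rack_def using rC by blast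
qed

lemma hyp_prod: assumes w0: "w0 \<in> PS" shows "Hyp PS Op (Op w0)"
  unfolding Hyp_def
proof
  fix z assume z: "z \<in> PS"
  let ?C = "inn_orbit PS Op z"
  obtain s where s: "s \<in> ?C" "\<forall>y\<in>PS. Op s y = Op w0 y" using fact[OF z w0] by blast
  have CP: "?C \<subseteq> PS" by (rule inn_orbit_sub[OF rP z])
  have img: "\<forall>w\<in>PS. Op w ` ?C = ?C" using orbit_img[OF rP z] by blast
  have e: "\<forall>y\<in>?C. Op w0 y = Op s y" using s(2) CP by auto
  have zC: "z \<in> ?C" by (rule inn_orbit.base)
  show "\<exists>C c. z \<in> C \<and> C \<subseteq> PS \<and> connected_rack C Op \<and> (\<forall>w\<in>PS. Op w ` C = C) \<and> c \<in> C \<and> (\<forall>y\<in>C. Op w0 y = Op c y)"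
    by (rule exI[of _ ?C], rule exI[of _ s]) (intro conjI zC CP orbit_conn[OF z] img s(1) e)
qed

end

section \<open>Bilinear forms on free abelian groups\<close>

definition FM :: "('a \<Rightarrow> 'b \<Rightarrow> 'c) \<Rightarrow> ('a \<Rightarrow>\<^sub>0 int) \<Rightarrow> ('b \<Rightarrow>\<^sub>0 int) \<Rightarrow> ('c \<Rightarrow>\<^sub>0 int)" where
  "FM K u v = frag_extend (\<lambda>a. frag_extend (\<lambda>b. frag_of (K a b)) v) u"

lemma frag_cmul_single: "frag_cmul c (Poly_Mapping.single x d) = Poly_Mapping.single x (c * d)"
  by (rule poly_mapping_eqI) (simp add: lookup_single when_def)

lemma free_mul_z_FM: "free_mul_z = FM pcode_prod"
  by (simp add: fun_eq_iff free_mul_z_def FM_def frag_extend_def frag_cmul_sum frag_cmul_single)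
lemma free_mul_r_FM: "free_mul_r = FM rcode_prod"
  by (simp add: fun_eq_iff free_mul_r_def FM_def frag_extend_def frag_cmul_sum frag_cmul_single)

lemma frag_extend_fun_diff: "frag_extend (\<lambda>a. F a - G a) f = frag_extend F f - frag_extend G f"
  using subset_UNIV
  by (induction f rule: frag_induction) (auto simp: frag_extend_diff)
lemma frag_extend_fun_add: "frag_extend (\<lambda>a. F a + G a) f = frag_extend F f + frag_extend G f"
  using subset_UNIV
  by (induction f rule: frag_induction) (auto simp: frag_extend_diff)
lemma frag_extend_fun_0: "frag_extend (\<lambda>a. 0) f = 0"
  by (rule frag_extend_eq_0) simp

lemma FM_0l[simp]: "FM K 0 v = 0" by (simp add: FM_def)
lemma FM_0r[simp]: "FM K u 0 = 0" by (simp add: FM_def frag_extend_fun_0)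
lemma FM_of[simp]: "FM K (frag_of a) (frag_of b) = frag_of (K a b)" by (simp add: FM_def)
lemma FM_diffl: "FM K (u - u') v = FM K u v - FM K u' v" by (simp add: FM_def frag_extend_diff)
lemma FM_addl: "FM K (u + u') v = FM K u v + FM K u' v" by (simp add: FM_def frag_extend_add)
lemma FM_diffr: "FM K u (v - v') = FM K u v - FM K u v'"
  by (simp add: FM_def frag_extend_diff frag_extend_fun_diff)
lemma FM_addr: "FM K u (v + v') = FM K u v + FM K u v'"
  by (simp add: FM_def frag_extend_add frag_extend_fun_add)

lemma zrel_extend: "(\<And>b. F b \<in> bz_rel) \<Longrightarrow> frag_extend F v \<in> bz_rel"
  unfolding frag_extend_def by (intro zrel_sum zrel_cmul) auto

lemma FM_ofl: "FM K (frag_of a) v = frag_extend (\<lambda>b. frag_of (K a b)) v" by (simp add: FM_def)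

section \<open>Products of permutation sets\<close>

lemma prod_map_bij2: assumes "bij_betw f X X'" "bij_betw g Y Y'"
  shows "bij_betw (pmap f g) (pset X Y) (pset X' Y')"
  unfolding bij_betw_def
proof
  show "inj_on (pmap f g) (pset X Y)"
  proof (rule inj_onI)
    fix u v assume u: "u \<in> pset X Y" and v: "v \<in> pset X Y" and e: "pmap f g u = pmap f g v"
    obtain a b where ab: "a \<in> X" "b \<in> Y" "u = prod_encode (a, b)" using u by (rule pset_cases)
    obtain c d where cd: "c \<in> X" "d \<in> Y" "v = prod_encode (c, d)" using v by (rule pset_cases)
    have "f a = f c" "g b = g d" using e ab cd by auto
    then have "a = c" "b = d" using ab cd assms by (meson bij_betw_imp_inj_on inj_onD)+
    then show "u = v" using ab cd by simp
  qed
  show "pmap f g ` pset X Y = pset X' Y'"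
  proof
    show "pmap f g ` pset X Y \<subseteq> pset X' Y'"
    proof
      fix w assume "w \<in> pmap f g ` pset X Y"
      then obtain u where u: "u \<in> pset X Y" "w = pmap f g u" by blast
      obtain a b where ab: "a \<in> X" "b \<in> Y" "u = prod_encode (a, b)" using u(1) by (rule pset_cases)
      show "w \<in> pset X' Y'" using u ab assms by (auto simp: bij_betwE)
    qed
    show "pset X' Y' \<subseteq> pmap f g ` pset X Y"
    proof
      fix w assume "w \<in> pset X' Y'"
      then obtain a b where ab: "a \<in> X'" "b \<in> Y'" "w = prod_encode (a, b)" by (rule pset_cases)
      obtain a0 where a0: "a0 \<in> X" "a = f a0" using ab(1) assms(1) bij_betw_imp_surj_on by (metis imageE)
      obtain b0 where b0: "b0 \<in> Y" "b = g b0" using ab(2) assms(2) bij_betw_imp_surj_on by (metis imageE)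
      have "w = pmap f g (prod_encode (a0, b0))" using ab a0 b0 by simp
      moreover have "prod_encode (a0, b0) \<in> pset X Y" using a0 b0 by simp
      ultimately show "w \<in> pmap f g ` pset X Y" by blast
    qed
  qed
qed

lemma pcode_pc: assumes "Rep_pcode A = (X, \<pi>)"
  shows "frag_of A = pc X \<pi> \<and> finite X \<and> bij_betw \<pi> X X"
proof -
  have a: "finite X" "\<pi> permutes X" using Rep_pcode[of A] assms by auto
  have "rs X \<pi> = \<pi>" using a(2) by (auto simp: rs_def fun_eq_iff permutes_not_in)
  moreover have "A = Abs_pcode (X, \<pi>)" using assms by (metis Rep_pcode_inverse)
  ultimately show ?thesis using a by (simp add: pc_def permutes_imp_bij)
qed

lemma pc_prod: assumes "finite X" "bij_betw f X X" "finite Y" "bij_betw g Y Y"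
  shows "frag_of (pcode_prod (Abs_pcode (X, rs X f)) (Abs_pcode (Y, rs Y g))) = pc (pset X Y) (pmap f g)"
proof -
  have "pcode_prod (Abs_pcode (X, rs X f)) (Abs_pcode (Y, rs Y g))
      = Abs_pcode (pset X Y, rs (pset X Y) (pmap (rs X f) (rs Y g)))"
    unfolding pcode_prod_def pc_rep[OF assms(1,2)] pc_rep[OF assms(3,4)]
    by (simp add: pset_def rs_def pmap_def)
  moreover have "rs (pset X Y) (pmap (rs X f) (rs Y g)) = rs (pset X Y) (pmap f g)"
    by (rule rs_cong) (auto simp: pmap_def rs_def dest: pset_dec)
  ultimately show ?thesis by (simp add: pc_def)
qed

lemma pc_mul: assumes "finite X" "bij_betw f X X" "finite Y" "bij_betw g Y Y"
  shows "free_mul_z (pc X f) (pc Y g) = pc (pset X Y) (pmap f g)"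
  using pc_prod[OF assms] by (simp add: free_mul_z_FM pc_def)

lemma pcode_prod_pc: assumes "Rep_pcode A = (X, \<pi>)" "Rep_pcode B = (Y, \<sigma>)"
  shows "frag_of (pcode_prod A B) = pc (pset X Y) (pmap \<pi> \<sigma>)"
proof -
  have a: "finite X" "bij_betw \<pi> X X" "finite Y" "bij_betw \<sigma> Y Y" using pcode_pc[OF assms(1)] pcode_pc[OF assms(2)] by auto
  have "rs X \<pi> = \<pi>" "rs Y \<sigma> = \<sigma>"
    using Rep_pcode[of A] Rep_pcode[of B] assms by (auto simp: rs_def fun_eq_iff permutes_not_in)
  moreover have "A = Abs_pcode (X, \<pi>)" "B = Abs_pcode (Y, \<sigma>)" using assms by (metis Rep_pcode_inverse)+
  ultimately show ?thesis using pc_prod[OF a] by simp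
qed

lemma pmap_bij: "bij_betw f X X \<Longrightarrow> bij_betw g Y Y \<Longrightarrow> bij_betw (pmap f g) (pset X Y) (pset X Y)"
  by (rule prod_map_bij2)

lemma iso_prodl: assumes "perm_iso X f X' f'" shows "perm_iso (pset X Y) (pmap f g) (pset X' Y) (pmap f' g)"
proof -
  obtain h where h: "bij_betw h X X'" "\<forall>x\<in>X. h (f x) = f' (h x)" using assms unfolding perm_iso_def by blast
  have "bij_betw (pmap h id) (pset X Y) (pset X' Y)" by (rule prod_map_bij2[OF h(1)]) simp
  moreover have "pmap h id (pmap f g u) = pmap f' g (pmap h id u)" if "u \<in> pset X Y" for u
    using that h(2) by (auto elim!: pset_cases)
  ultimately show ?thesis unfolding perm_iso_def by blast
qed

lemma iso_swap: "perm_iso (pset X Y) (pmap f g) (pset Y X) (pmap g f)"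
proof -
  define h where "h = (\<lambda>u. prod_encode (snd (prod_decode u), fst (prod_decode u)))"
  have hh[simp]: "h (prod_encode (a, b)) = prod_encode (b, a)" for a b by (simp add: h_def)
  have "bij_betw h (pset X Y) (pset Y X)"
  proof (rule bij_betw_byWitness[where f' = h])
    show "\<forall>a\<in>pset X Y. h (h a) = a" by (auto elim!: pset_cases)
    show "\<forall>a\<in>pset Y X. h (h a) = a" by (auto elim!: pset_cases)
    show "h ` pset X Y \<subseteq> pset Y X" by (auto elim!: pset_cases)
    show "h ` pset Y X \<subseteq> pset X Y" by (auto elim!: pset_cases)
  qed
  moreover have "h (pmap f g u) = pmap g f (h u)" if "u \<in> pset X Y" for u
    using that by (auto elim!: pset_cases)
  ultimately show ?thesis unfolding perm_iso_def by blast
qed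

lemma zrel_prod_iso: assumes "Rep_pcode A = (X, \<pi>)" "Rep_pcode B = (Y, \<sigma>)" "perm_iso X \<pi> Y \<sigma>"
  "Rep_pcode C = (Z, \<tau>)"
  shows "frag_of (pcode_prod A C) - frag_of (pcode_prod B C) \<in> bz_rel"
proof -
  have a: "finite X" "bij_betw \<pi> X X" "finite Y" "bij_betw \<sigma> Y Y" "finite Z" "bij_betw \<tau> Z Z"
    using pcode_pc[OF assms(1)] pcode_pc[OF assms(2)] pcode_pc[OF assms(4)] by auto
  show ?thesis unfolding pcode_prod_pc[OF assms(1,4)] pcode_prod_pc[OF assms(2,4)]
    by (rule zrel_iso) (use a in \<open>auto simp: finite_pset pmap_bij iso_prodl[OF assms(3)]\<close>)
qed

lemma zrel_prod_swap: assumes "Rep_pcode A = (X, \<pi>)" "Rep_pcode B = (Y, \<sigma>)"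
  shows "frag_of (pcode_prod A B) - frag_of (pcode_prod B A) \<in> bz_rel"
proof -
  have a: "finite X" "bij_betw \<pi> X X" "finite Y" "bij_betw \<sigma> Y Y"
    using pcode_pc[OF assms(1)] pcode_pc[OF assms(2)] by auto
  show ?thesis unfolding pcode_prod_pc[OF assms(1,2)] pcode_prod_pc[OF assms(2,1)]
    by (rule zrel_iso) (use a in \<open>auto simp: finite_pset pmap_bij iso_swap\<close>)
qed

lemma pset_disj: "S \<inter> T = {} \<Longrightarrow> pset S Y \<inter> pset T Y = {}"
  by (auto simp: pset_def)
lemma pset_un: "pset S Y \<union> pset T Y = pset (S \<union> T) Y"
  by (auto simp: pset_def)

lemma zrel_prod_dec: assumes A: "Rep_pcode A = (X, \<pi>)" and "\<pi> ` S = S" "\<pi> ` T = T" "S \<inter> T = {}" "S \<union> T = X"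
  and B: "Rep_pcode B = (S, \<lambda>x. if x \<in> S then \<pi> x else x)" and C: "Rep_pcode C = (T, \<lambda>x. if x \<in> T then \<pi> x else x)"
  and D: "Rep_pcode D = (Z, \<tau>)"
  shows "frag_of (pcode_prod A D) - frag_of (pcode_prod B D) - frag_of (pcode_prod C D) \<in> bz_rel"
proof -
  have a: "finite X" "bij_betw \<pi> X X" "finite Z" "bij_betw \<tau> Z Z"
    using pcode_pc[OF A] pcode_pc[OF D] by auto
  have bS: "bij_betw \<pi> S S" using a(2) assms(2,5) unfolding bij_betw_def by (meson inj_on_subset sup_ge1)
  have bT: "bij_betw \<pi> T T" using a(2) assms(3,5) unfolding bij_betw_def by (meson inj_on_subset sup_ge2)
  have e1: "pc (pset S Z) (pmap (\<lambda>x. if x \<in> S then \<pi> x else x) \<tau>) = pc (pset S Z) (pmap \<pi> \<tau>)"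
    by (rule pc_cong) (auto elim!: pset_cases)
  have e2: "pc (pset T Z) (pmap (\<lambda>x. if x \<in> T then \<pi> x else x) \<tau>) = pc (pset T Z) (pmap \<pi> \<tau>)"
    by (rule pc_cong) (auto elim!: pset_cases)
  show ?thesis unfolding pcode_prod_pc[OF A D] pcode_prod_pc[OF B D] pcode_prod_pc[OF C D] e1 e2
  proof (rule zrel_dec)
    show "finite (pset X Z)" using a by (simp add: finite_pset)
    show "bij_betw (pmap \<pi> \<tau>) (pset X Z) (pset X Z)" using a by (simp add: pmap_bij)
    show "pmap \<pi> \<tau> ` pset S Z = pset S Z" using pmap_bij[OF bS a(4)] bij_betw_imp_surj_on by blast
    show "pmap \<pi> \<tau> ` pset T Z = pset T Z" using pmap_bij[OF bT a(4)] bij_betw_imp_surj_on by blast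
    show "pset S Z \<inter> pset T Z = {}" using pset_disj assms(4) by blast
    show "pset S Z \<union> pset T Z = pset X Z" using pset_un assms(5) by simp
  qed
qed

lemma zrel_mul_left: assumes "u \<in> bz_rel" shows "free_mul_z u v \<in> bz_rel"
  using assms
proof induct
  case (iso A X \<pi> B Y \<sigma>)
  have e: "free_mul_z (frag_of A - frag_of B) v = frag_extend (\<lambda>c. frag_of (pcode_prod A c) - frag_of (pcode_prod B c)) v"
    by (simp add: free_mul_z_FM FM_diffl FM_ofl frag_extend_fun_diff)
  have r: "frag_of (pcode_prod A c) - frag_of (pcode_prod B c) \<in> bz_rel" for c
  proof -
    obtain Z \<tau> where "Rep_pcode c = (Z, \<tau>)" by (metis surj_pair)
    then show ?thesis by (rule zrel_prod_iso[OF iso(1,2,3)])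
  qed
  show ?case unfolding e by (rule zrel_extend) (rule r)
next
  case (dec A X \<pi> S T B C)
  have e: "free_mul_z (frag_of A - frag_of B - frag_of C) v
     = frag_extend (\<lambda>c. frag_of (pcode_prod A c) - frag_of (pcode_prod B c) - frag_of (pcode_prod C c)) v"
    by (simp add: free_mul_z_FM FM_diffl FM_ofl frag_extend_fun_diff)
  have r: "frag_of (pcode_prod A c) - frag_of (pcode_prod B c) - frag_of (pcode_prod C c) \<in> bz_rel" for c
  proof -
    obtain Z \<tau> where "Rep_pcode c = (Z, \<tau>)" by (metis surj_pair)
    then show ?thesis by (rule zrel_prod_dec[OF dec(1-7)])
  qed
  show ?case unfolding e by (rule zrel_extend) (rule r)
next
  case zero then show ?case by (simp add: free_mul_z_FM bz_rel.zero)
next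
  case (diff u v') then show ?case by (simp add: free_mul_z_FM FM_diffl bz_rel.diff)
qed

lemma zrel_comm: "free_mul_z u v - free_mul_z v u \<in> bz_rel"
proof -
  have h: "FM pcode_prod (frag_of a) v - FM pcode_prod v (frag_of a) \<in> bz_rel" for a
    using subset_UNIV
  proof (induction v rule: frag_induction)
    case zero then show ?case by (simp add: bz_rel.zero)
  next
    case (one b)
    obtain X \<pi> where "Rep_pcode a = (X, \<pi>)" by (metis surj_pair)
    moreover obtain Y \<sigma> where "Rep_pcode b = (Y, \<sigma>)" by (metis surj_pair)
    ultimately show ?case using zrel_prod_swap by simp
  next
    case (diff x y)
    have "FM pcode_prod (frag_of a) (x - y) - FM pcode_prod (x - y) (frag_of a)
      = (FM pcode_prod (frag_of a) x - FM pcode_prod x (frag_of a)) - (FM pcode_prod (frag_of a) y - FM pcode_prod y (frag_of a))"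
      by (simp add: FM_diffl FM_diffr algebra_simps)
    then show ?case using diff bz_rel.diff by simp
  qed
  have "FM pcode_prod u v - FM pcode_prod v u \<in> bz_rel"
    using subset_UNIV
  proof (induction u rule: frag_induction)
    case zero then show ?case by (simp add: bz_rel.zero)
  next
    case (one a) show ?case using h[of a] by simp
  next
    case (diff x y)
    have "FM pcode_prod (x - y) v - FM pcode_prod v (x - y)
      = (FM pcode_prod x v - FM pcode_prod v x) - (FM pcode_prod y v - FM pcode_prod v y)"
      by (simp add: FM_diffl FM_diffr algebra_simps)
    then show ?case using diff bz_rel.diff by simp
  qed
  then show ?thesis by (simp add: free_mul_z_FM)
qed

lemma zrel_mul_right: assumes "u \<in> bz_rel" shows "free_mul_z v u \<in> bz_rel"
proof -
  have "free_mul_z v u = (free_mul_z v u - free_mul_z u v) + free_mul_z u v" by simp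
  then show ?thesis using zrel_add[OF zrel_comm zrel_mul_left[OF assms]] by metis
qed

lemma bz_eq_mul: assumes "bz_eq a b" "bz_eq c d" shows "bz_eq (free_mul_z a c) (free_mul_z b d)"
proof -
  have "free_mul_z a c - free_mul_z b d = free_mul_z (a - b) c + free_mul_z b (c - d)"
    by (simp add: free_mul_z_FM FM_diffl FM_diffr)
  then show ?thesis using assms zrel_add zrel_mul_left zrel_mul_right unfolding bz_eq_def by metis
qed

lemma prod_sub1: assumes rX: "is_rack X op" and rY: "is_rack Y op'" and S: "is_subrack S X op"
  shows "is_subrack (pset S Y) (pset X Y) (pop op op')"
  unfolding is_subrack_def
proof (intro conjI ballI)
  have SX: "S \<subseteq> X" using S unfolding is_subrack_def by simp
  then show "pset S Y \<subseteq> pset X Y" by (auto simp: pset_def)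
  fix w assume "w \<in> pset S Y"
  then obtain a b where ab: "a \<in> S" "b \<in> Y" "w = prod_encode (a, b)" by (rule pset_cases)
  have "bij_betw (op a) S S" using rack_bij[OF subrack_rack[OF rX S] ab(1)] .
  then have "bij_betw (pmap (op a) (op' b)) (pset S Y) (pset S Y)" using pmap_bij rack_bij[OF rY ab(2)] by blast
  then show "pop op op' w ` pset S Y = pset S Y" unfolding ab(3) pop_pmap by (rule bij_betw_imp_surj_on)
qed

lemma prod_sub2: assumes rX: "is_rack X op" and rY: "is_rack Y op'" and S: "is_subrack S Y op'"
  shows "is_subrack (pset X S) (pset X Y) (pop op op')"
  unfolding is_subrack_def
proof (intro conjI ballI)
  have SX: "S \<subseteq> Y" using S unfolding is_subrack_def by simp
  then show "pset X S \<subseteq> pset X Y" by (auto simp: pset_def)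
  fix w assume "w \<in> pset X S"
  then obtain a b where ab: "a \<in> X" "b \<in> S" "w = prod_encode (a, b)" by (rule pset_cases)
  have "bij_betw (op' b) S S" using rack_bij[OF subrack_rack[OF rY S] ab(2)] .
  then have "bij_betw (pmap (op a) (op' b)) (pset X S) (pset X S)" using pmap_bij rack_bij[OF rX ab(1)] by blast
  then show "pop op op' w ` pset X S = pset X S" unfolding ab(3) pop_pmap by (rule bij_betw_imp_surj_on)
qed

lemma prod_dec1: assumes rX: "is_rack X op" and rY: "is_rack Y op'" and d: "isdec X op S T"
  shows "isdec (pset X Y) (pop op op') (pset S Y) (pset T Y)"
  using d prod_sub1[OF rX rY] unfolding isdec_def by (auto simp: pset_def)

lemma prod_dec2: assumes rX: "is_rack X op" and rY: "is_rack Y op'" and d: "isdec Y op' S T"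
  shows "isdec (pset X Y) (pop op op') (pset X S) (pset X T)"
  using d prod_sub2[OF rX rY] unfolding isdec_def by (auto simp: pset_def)

lemma FM_mono_rel: "bz_eq a b \<Longrightarrow> bz_eq (free_mul_z a c) (free_mul_z b c)"
  by (rule bz_eq_mul) auto
lemma FM_mono_rel2: "bz_eq a b \<Longrightarrow> bz_eq (free_mul_z c a) (free_mul_z c b)"
  by (rule bz_eq_mul) auto

lemma Lam_mul_conn: assumes "finite X" "connected_rack X op" "finite Y" "connected_rack Y op'"
  shows "bz_eq (Lam (pset X Y) (pop op op')) (free_mul_z (Lam X op) (Lam Y op'))"
proof -
  interpret prodr X op Y op' using assms by unfold_locales
  define m where "m = (SOME c. c \<in> X)"
  define m' where "m' = (SOME c. c \<in> Y)"
  have m: "m \<in> X" using assms(2) m_def unfolding connected_rack_def by (simp add: some_in_eq)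
  have m': "m' \<in> Y" using assms(4) m'_def unfolding connected_rack_def by (simp add: some_in_eq)
  have w0: "prod_encode (m, m') \<in> PS" using m m' by simp
  have "free_mul_z (Lam X op) (Lam Y op') = pc PS (pmap (op m) (op' m'))"
    using Lam_conn[OF assms(1,2)] Lam_conn[OF assms(3,4)] m_def m'_def
      pc_mul[OF assms(1) rack_bij[OF rX m] assms(3) rack_bij[OF rY m']] by simp
  also have "\<dots> = pc PS (Op (prod_encode (m, m')))" by (simp add: pop_pmap)
  finally have e: "free_mul_z (Lam X op) (Lam Y op') = pc PS (Op (prod_encode (m, m')))" .
  have "bz_eq (Lam PS Op) (pc PS (Op (prod_encode (m, m'))))"
    by (rule Lam_hyp[OF finite_pset[OF assms(1,3)] rP rack_bij[OF rP w0] hyp_prod[OF w0]])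
  then show ?thesis using e by simp
qed

lemma Lam_mul: assumes "finite X" "is_rack X op" "finite Y" "is_rack Y op'"
  shows "bz_eq (Lam (pset X Y) (pop op op')) (free_mul_z (Lam X op) (Lam Y op'))"
  using assms
proof (induction "card X" arbitrary: X rule: less_induct)
  case less
  note rX = less.prems(2) and rY = less.prems(4)
  show ?case
  proof (cases "X = {}")
    case True then show ?thesis by (simp add: free_mul_z_FM)
  next
    case Xne: False
    show ?thesis
    proof (cases "connected_rack X op")
      case cX: False
      define S0 where "S0 = fst (SD X op)"
      define T0 where "T0 = snd (SD X op)"
      have d0: "isdec X op S0 T0" "S0 \<noteq> {}" "T0 \<noteq> {}" using SD_prop[OF rX Xne cX] S0_def T0_def by auto
      have LX: "Lam X op = Lam S0 op + Lam T0 op" using Lam_split[OF less.prems(1) rX Xne cX] S0_def T0_def by simp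
      have fS0: "finite S0" "finite T0" using d0 less.prems(1) unfolding isdec_def by auto
      have cS0: "card S0 < card X" using dec_card[OF less.prems(1) d0(1) d0(3)] .
      have cT0: "card T0 < card X" using dec_card[OF less.prems(1) isdec_sym[OF d0(1)] d0(2)] .
      have rS0: "is_rack S0 op" "is_rack T0 op" using dec_rack[OF rX d0(1)] by auto
      have h1: "bz_eq (Lam (pset S0 Y) (pop op op')) (free_mul_z (Lam S0 op) (Lam Y op'))"
        by (rule less.hyps[OF cS0 fS0(1) rS0(1) less.prems(3) rY])
      have h2: "bz_eq (Lam (pset T0 Y) (pop op op')) (free_mul_z (Lam T0 op) (Lam Y op'))"
        by (rule less.hyps[OF cT0 fS0(2) rS0(2) less.prems(3) rY])
      have "bz_eq (Lam (pset X Y) (pop op op')) (Lam (pset S0 Y) (pop op op') + Lam (pset T0 Y) (pop op op'))"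
        by (rule Lam_add[OF finite_pset[OF less.prems(1,3)] prod_rack[OF rX rY] prod_dec1[OF rX rY d0(1)]])
      moreover have "free_mul_z (Lam X op) (Lam Y op') = free_mul_z (Lam S0 op) (Lam Y op') + free_mul_z (Lam T0 op) (Lam Y op')"
        unfolding LX by (simp add: free_mul_z_FM FM_addl)
      ultimately show ?thesis using bz_eq_add[OF h1 h2] bz_eq_trans by metis
    next
      case cX: True
      show ?thesis using less.prems(3,4)
      proof (induction "card Y" arbitrary: Y rule: less_induct)
        case less
        note rY = less.prems(2)
        show ?case
        proof (cases "Y = {}")
          case True then show ?thesis by (simp add: free_mul_z_FM)
        next
          case Yne: False
          show ?thesis
          proof (cases "connected_rack Y op'")
            case True then show ?thesis by (rule Lam_mul_conn[OF \<open>finite X\<close> cX less.prems(1)])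
          next
            case cY: False
            define S0 where "S0 = fst (SD Y op')"
            define T0 where "T0 = snd (SD Y op')"
            have d0: "isdec Y op' S0 T0" "S0 \<noteq> {}" "T0 \<noteq> {}" using SD_prop[OF rY Yne cY] S0_def T0_def by auto
            have LY: "Lam Y op' = Lam S0 op' + Lam T0 op'" using Lam_split[OF less.prems(1) rY Yne cY] S0_def T0_def by simp
            have fS0: "finite S0" "finite T0" using d0 less.prems(1) unfolding isdec_def by auto
            have cS0: "card S0 < card Y" using dec_card[OF less.prems(1) d0(1) d0(3)] .
            have cT0: "card T0 < card Y" using dec_card[OF less.prems(1) isdec_sym[OF d0(1)] d0(2)] .
            have rS0: "is_rack S0 op'" "is_rack T0 op'" using dec_rack[OF rY d0(1)] by auto
            have h1: "bz_eq (Lam (pset X S0) (pop op op')) (free_mul_z (Lam X op) (Lam S0 op'))"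
              by (rule less.hyps[OF cS0 fS0(1) rS0(1)])
            have h2: "bz_eq (Lam (pset X T0) (pop op op')) (free_mul_z (Lam X op) (Lam T0 op'))"
              by (rule less.hyps[OF cT0 fS0(2) rS0(2)])
            have "bz_eq (Lam (pset X Y) (pop op op')) (Lam (pset X S0) (pop op op') + Lam (pset X T0) (pop op op'))"
              by (rule Lam_add[OF finite_pset[OF \<open>finite X\<close> less.prems(1)] prod_rack[OF rX rY] prod_dec2[OF rX rY d0(1)]])
            moreover have "free_mul_z (Lam X op) (Lam Y op') = free_mul_z (Lam X op) (Lam S0 op') + free_mul_z (Lam X op) (Lam T0 op')"
              unfolding LY by (simp add: free_mul_z_FM FM_addr)
            ultimately show ?thesis using bz_eq_add[OF h1 h2] bz_eq_trans by metis
          qed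
        qed
      qed
    qed
  qed
qed

definition cf :: "nat \<Rightarrow> nat \<Rightarrow> nat" where "cf n = (\<lambda>i. if i < n then (i + 1) mod n else i)"
definition cc :: "nat \<Rightarrow> pcode \<Rightarrow>\<^sub>0 int" where "cc n = frag_of (Abs_pcode ({0..<n}, cf n))"

lemma cf_bij: "bij_betw (cf n) {0..<n} {0..<n}"
proof -
  have inj: "inj_on (cf n) {0..<n}"
  proof (rule inj_onI)
    fix i j assume i: "i \<in> {0..<n}" and j: "j \<in> {0..<n}" and e: "cf n i = cf n j"
    have m: "(k + 1) mod n = (if k + 1 = n then 0 else k + 1)" if "k < n" for k
      using that by auto
    show "i = j" using e i j m[of i] m[of j] by (auto simp: cf_def split: if_splits)
  qed
  have "cf n ` {0..<n} \<subseteq> {0..<n}" by (auto simp: cf_def)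
  then have "cf n ` {0..<n} = {0..<n}" using endo_inj_surj[OF _ _ inj] by simp
  then show ?thesis using inj unfolding bij_betw_def by simp
qed

lemma cc_pc: "cc n = pc {0..<n} (cf n)"
proof -
  have "rs {0..<n} (cf n) = cf n" by (auto simp: rs_def cf_def fun_eq_iff)
  then show ?thesis by (simp add: cc_def pc_def)
qed

locale perm_fin =
  fixes \<sigma> :: "nat \<Rightarrow> nat"
  assumes perm: "permutation \<sigma>"
begin

lemma self_in: "y \<in> orbit \<sigma> y" by (rule permutation_self_in_orbit[OF perm])

lemma orbit_eq: assumes "z \<in> orbit \<sigma> y" shows "orbit \<sigma> z = orbit \<sigma> y"
proof
  show "orbit \<sigma> z \<subseteq> orbit \<sigma> y"
  proof
    fix w assume "w \<in> orbit \<sigma> z" then show "w \<in> orbit \<sigma> y" using assms by (rule Orbits.orbit_trans)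
  qed
  have yz: "y \<in> orbit \<sigma> z" by (rule orbit_swap[OF self_in assms])
  show "orbit \<sigma> y \<subseteq> orbit \<sigma> z"
  proof
    fix w assume "w \<in> orbit \<sigma> y" then show "w \<in> orbit \<sigma> z" using yz by (rule Orbits.orbit_trans)
  qed
qed

lemma orbit_fin: "finite (orbit \<sigma> y)" by (rule finite_orbit[OF self_in])

lemma porbit_img: "\<sigma> ` orbit \<sigma> y = orbit \<sigma> y"
proof (rule endo_inj_surj[OF orbit_fin])
  show "\<sigma> ` orbit \<sigma> y \<subseteq> orbit \<sigma> y" by (auto intro: orbit.step)
  show "inj_on \<sigma> (orbit \<sigma> y)" using bij_is_inj[OF permutation_bijective[OF perm]] inj_on_subset by blast
qed

lemma porbit_sub: assumes "\<sigma> ` X = X" "y \<in> X" shows "orbit \<sigma> y \<subseteq> X"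
proof
  fix z assume "z \<in> orbit \<sigma> y" then show "z \<in> X"
    by induct (use assms in auto)
qed

lemma orbit_iso: "perm_iso {0..<card (orbit \<sigma> y)} (cf (card (orbit \<sigma> y))) (orbit \<sigma> y) \<sigma>"
proof -
  obtain m where m: "m > 0" "(\<sigma> ^^ m) y = y" using permutation_self[OF perm] by blast
  define p where "p = (LEAST m. 0 < m \<and> (\<sigma> ^^ m) y = y)"
  have p: "0 < p" "(\<sigma> ^^ p) y = y" using LeastI[of "\<lambda>m. 0 < m \<and> (\<sigma> ^^ m) y = y" m] m p_def by auto
  have pmin: "\<not> ((\<sigma> ^^ k) y = y)" if "0 < k" "k < p" for k
    using not_less_Least[of k "\<lambda>m. 0 < m \<and> (\<sigma> ^^ m) y = y"] that p_def by auto
  define h where "h = (\<lambda>i. (\<sigma> ^^ i) y)"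
  have C: "orbit \<sigma> y = h ` {0..<p}" using orbit_altdef_bounded[OF p(2,1)] h_def by auto
  have injs: "inj (\<sigma> ^^ i)" for i using bij_is_inj[OF permutation_bijective[OF perm]] by simp
  have inj: "inj_on h {0..<p}"
  proof (rule inj_onI)
    fix i j assume i: "i \<in> {0..<p}" and j: "j \<in> {0..<p}" and e: "h i = h j"
    show "i = j"
    proof (rule ccontr)
      assume "i \<noteq> j"
      then consider "i < j" | "j < i" by linarith
      then show False
      proof cases
        case 1
        have "(\<sigma> ^^ i) ((\<sigma> ^^ (j - i)) y) = (\<sigma> ^^ j) y"
          using 1 by (metis comp_apply funpow_add le_add_diff_inverse less_imp_le)
        then have "(\<sigma> ^^ i) ((\<sigma> ^^ (j - i)) y) = (\<sigma> ^^ i) y" using e h_def by simp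
        then have "(\<sigma> ^^ (j - i)) y = y" using injs[of i] by (simp add: inj_eq)
        then show False using pmin[of "j - i"] 1 j by (auto simp: less_imp_diff_less)
      next
        case 2
        have "(\<sigma> ^^ j) ((\<sigma> ^^ (i - j)) y) = (\<sigma> ^^ i) y"
          using 2 by (metis comp_apply funpow_add le_add_diff_inverse less_imp_le)
        then have "(\<sigma> ^^ j) ((\<sigma> ^^ (i - j)) y) = (\<sigma> ^^ j) y" using e h_def by simp
        then have "(\<sigma> ^^ (i - j)) y = y" using injs[of j] by (simp add: inj_eq)
        then show False using pmin[of "i - j"] 2 i by (auto simp: less_imp_diff_less)
      qed
    qed
  qed
  have cp: "card (orbit \<sigma> y) = p" using C card_image[OF inj] by simp
  have "bij_betw h {0..<p} (orbit \<sigma> y)" using inj C unfolding bij_betw_def by simp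
  moreover have "h (cf p i) = \<sigma> (h i)" if "i \<in> {0..<p}" for i
  proof (cases "i + 1 = p")
    case True
    then have "(\<sigma> ^^ (Suc i)) y = y" using p(2) by simp
    then show ?thesis using True that by (simp add: h_def cf_def)
  next
    case False
    then have "i + 1 < p" using that by simp
    then show ?thesis by (simp add: h_def cf_def)
  qed
  ultimately show ?thesis unfolding perm_iso_def cp by blast
qed

end

lemma num_cycles_fin: "finite X \<Longrightarrow> finite {C. \<exists>y\<in>X. C = orbit f y \<and> card C = n}"
proof -
  assume "finite X"
  moreover have "{C. \<exists>y\<in>X. C = orbit f y \<and> card C = n} \<subseteq> orbit f ` X" by auto
  ultimately show ?thesis using finite_surj by blast
qed

lemma cyc_decomp: assumes "finite X" "permutation \<sigma>" "\<sigma> ` X = X" "card X \<le> N"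
  shows "bz_eq (pc X \<sigma>) (\<Sum>k\<in>{1..N}. frag_cmul (int (num_cycles k \<sigma> X)) (cc k))"
  using assms
proof (induction "card X" arbitrary: X rule: less_induct)
  case less
  interpret perm_fin \<sigma> by unfold_locales (rule less.prems(2))
  have injs: "inj \<sigma>" using bij_is_inj[OF permutation_bijective[OF perm]] .
  show ?case
  proof (cases "X = {}")
    case True
    have "num_cycles k \<sigma> X = 0" for k using True by (simp add: num_cycles_def)
    then show ?thesis using True pc_empty_rel zrel_neg by (simp add: bz_eq_def)
  next
    case False
    then obtain y where y: "y \<in> X" by blast
    define C where "C = orbit \<sigma> y"
    have CX: "C \<subseteq> X" using porbit_sub[OF less.prems(3) y] C_def by simp
    have yC: "y \<in> C" using self_in C_def by simp
    have Ci: "\<sigma> ` C = C" using porbit_img C_def by simp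
    have Di: "\<sigma> ` (X - C) = X - C"
      using inj_on_image_set_diff[OF inj_on_subset[OF injs subset_UNIV] , of X C] CX Ci less.prems(3) by auto
    have fX: "finite (X - C)" using less.prems(1) by simp
    have cD: "card (X - C) < card X"
      by (rule psubset_card_mono[OF less.prems(1)]) (use yC y in blast)
    have bX: "bij_betw \<sigma> X X" using inj_on_subset[OF injs subset_UNIV] less.prems(3) unfolding bij_betw_def by simp
    have bC: "bij_betw \<sigma> C C" using inj_on_subset[OF injs subset_UNIV] Ci unfolding bij_betw_def by simp
    have fC: "finite C" using orbit_fin C_def by simp
    define n where "n = card C"
    have n1: "1 \<le> n" using fC yC n_def by (metis One_nat_def Suc_leI card_gt_0_iff empty_iff)
    have nN: "n \<le> N" using card_mono[OF less.prems(1) CX] less.prems(4) n_def by simp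
    have IH: "bz_eq (pc (X - C) \<sigma>) (\<Sum>k\<in>{1..N}. frag_cmul (int (num_cycles k \<sigma> (X - C))) (cc k))"
      using less.hyps[OF cD fX less.prems(2) Di] less.prems(4) cD by simp
    have dec: "pc X \<sigma> - pc C \<sigma> - pc (X - C) \<sigma> \<in> bz_rel"
      by (rule zrel_dec[OF less.prems(1) bX Ci Di]) (use CX in auto)
    have iso: "pc {0..<n} (cf n) - pc C \<sigma> \<in> bz_rel"
      by (rule zrel_iso[OF _ fC cf_bij bC]) (use orbit_iso C_def n_def in auto)
    have e1: "bz_eq (pc X \<sigma>) (pc C \<sigma> + pc (X - C) \<sigma>)"
      using dec unfolding bz_eq_def by (simp add: algebra_simps)
    have e2: "bz_eq (pc C \<sigma>) (cc n)"
      using iso zrel_neg unfolding bz_eq_def cc_pc by fastforce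
    have nc: "num_cycles k \<sigma> X = num_cycles k \<sigma> (X - C) + (if k = n then 1 else 0)" for k
    proof -
      let ?A = "{D. \<exists>z\<in>X - C. D = orbit \<sigma> z \<and> card D = k}"
      have eq: "{D. \<exists>z\<in>X. D = orbit \<sigma> z \<and> card D = k} = ?A \<union> (if k = n then {C} else {})"
      proof
        show "{D. \<exists>z\<in>X. D = orbit \<sigma> z \<and> card D = k} \<subseteq> ?A \<union> (if k = n then {C} else {})"
        proof
          fix D assume "D \<in> {D. \<exists>z\<in>X. D = orbit \<sigma> z \<and> card D = k}"
          then obtain z where z: "z \<in> X" "D = orbit \<sigma> z" "card D = k" by blast
          show "D \<in> ?A \<union> (if k = n then {C} else {})"
          proof (cases "z \<in> C")
            case True
            then have "D = C" using orbit_eq[of z y] z(2) C_def by simp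
            then show ?thesis using z(3) n_def by simp
          next
            case False then show ?thesis using z by blast
          qed
        qed
        show "?A \<union> (if k = n then {C} else {}) \<subseteq> {D. \<exists>z\<in>X. D = orbit \<sigma> z \<and> card D = k}"
          using y C_def n_def by auto
      qed
      have nin: "C \<notin> ?A"
      proof
        assume "C \<in> ?A"
        then obtain z where z: "z \<in> X - C" "C = orbit \<sigma> z" by blast
        then show False using self_in[of z] by simp
      qed
      have fA: "finite ?A" using num_cycles_fin[OF fX] by simp
      show ?thesis unfolding num_cycles_def eq using nin fA by (cases "k = n") simp_all
    qed
    have "(\<Sum>k\<in>{1..N}. frag_cmul (int (num_cycles k \<sigma> X)) (cc k))
        = (\<Sum>k\<in>{1..N}. frag_cmul (int (num_cycles k \<sigma> (X - C))) (cc k) + (if k = n then cc k else 0))"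
      by (rule sum.cong) (auto simp: nc frag_cmul_distrib)
    also have "\<dots> = (\<Sum>k\<in>{1..N}. frag_cmul (int (num_cycles k \<sigma> (X - C))) (cc k)) + cc n"
      using n1 nN by (simp add: sum.distrib)
    finally have s: "(\<Sum>k\<in>{1..N}. frag_cmul (int (num_cycles k \<sigma> X)) (cc k))
        = (\<Sum>k\<in>{1..N}. frag_cmul (int (num_cycles k \<sigma> (X - C))) (cc k)) + cc n" .
    have "bz_eq (pc C \<sigma> + pc (X - C) \<sigma>) (cc n + (\<Sum>k\<in>{1..N}. frag_cmul (int (num_cycles k \<sigma> (X - C))) (cc k)))"
      by (rule bz_eq_add[OF e2 IH])
    then show ?thesis using e1 bz_eq_trans s by (simp add: add.commute)
  qed
qed

definition Lr :: "rcode \<Rightarrow> pcode \<Rightarrow>\<^sub>0 int" where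
  "Lr A = Lam (fst (Rep_rcode A)) (snd (Rep_rcode A))"
definition LL :: "(rcode \<Rightarrow>\<^sub>0 int) \<Rightarrow> pcode \<Rightarrow>\<^sub>0 int" where
  "LL u = frag_extend Lr u"
definition lamf :: "br \<Rightarrow> bz" where
  "lamf x = abs_bz (LL (rep_br x))"

lemma LL_diff: "LL (a - b) = LL a - LL b" by (simp add: LL_def frag_extend_diff)
lemma LL_add: "LL (a + b) = LL a + LL b" by (simp add: LL_def frag_extend_add)
lemma LL_of: "LL (frag_of A) = Lr A" by (simp add: LL_def)
lemma LL_0: "LL 0 = 0" by (simp add: LL_def)

lemma Lr_rep: "Rep_rcode A = (X, op) \<Longrightarrow> Lr A = Lam X op" by (simp add: Lr_def)
lemma rcode_fin: "Rep_rcode A = (X, op) \<Longrightarrow> finite X \<and> is_rack X op"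
  using Rep_rcode[of A] by auto

lemma LL_rel: assumes "u \<in> br_rel" shows "LL u \<in> bz_rel"
  using assms
proof induct
  case (iso A X op B Y op')
  obtain h where h: "bij_betw h X Y" "\<forall>a\<in>X. \<forall>b\<in>X. h (op a b) = op' (h a) (h b)"
    using iso(3) unfolding rack_iso_def by blast
  have a: "finite X" "is_rack X op" "finite Y" "is_rack Y op'" using rcode_fin iso(1,2) by auto
  have "rhom X op Y op' h" by unfold_locales (use a h in auto)
  then have "bz_eq (Lam X op) (Lam Y op')" using Lam_iso a(1) by blast
  then show ?case using Lr_rep[OF iso(1)] Lr_rep[OF iso(2)] by (simp add: LL_diff LL_of bz_eq_def)
next
  case (dec A X op S T B C)
  have a: "finite X" "is_rack X op" using rcode_fin dec(1) by auto
  have "isdec X op S T" using dec(2-5) unfolding isdec_def by simp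
  then have "bz_eq (Lam X op) (Lam S op + Lam T op)" using Lam_add a by blast
  then show ?case using Lr_rep[OF dec(1)] Lr_rep[OF dec(6)] Lr_rep[OF dec(7)]
    by (simp add: LL_diff LL_add LL_of bz_eq_def diff_diff_eq)
next
  case zero then show ?case by (simp add: LL_0 bz_rel.zero)
next
  case (diff u v) then show ?case by (simp add: LL_diff bz_rel.diff)
qed

lemma LL_eq: "br_eq u v \<Longrightarrow> bz_eq (LL u) (LL v)"
  unfolding br_eq_def bz_eq_def using LL_rel LL_diff by metis

lemma Lr_mul: "bz_eq (Lr (rcode_prod a b)) (free_mul_z (Lr a) (Lr b))"
proof -
  obtain X op where A: "Rep_rcode a = (X, op)" by (metis surj_pair)
  obtain Y op' where B: "Rep_rcode b = (Y, op')" by (metis surj_pair)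
  have fa: "finite X" "is_rack X op" "finite Y" "is_rack Y op'" using rcode_fin A B by auto
  show ?thesis using Lam_mul[OF fa] Lr_rep[OF A] Lr_rep[OF B] Lr_rep[OF rcode_prod_rep[OF A B]] by simp
qed

lemma LL_mul: "LL (free_mul_r u v) - free_mul_z (LL u) (LL v) \<in> bz_rel"
proof -
  have h: "LL (FM rcode_prod (frag_of a) v) - FM pcode_prod (Lr a) (LL v) \<in> bz_rel" for a
    using subset_UNIV
  proof (induction v rule: frag_induction)
    case zero then show ?case by (simp add: LL_0 bz_rel.zero)
  next
    case (one b) then show ?case using Lr_mul[of a b] by (simp add: LL_of free_mul_z_FM bz_eq_def)
  next
    case (diff x y)
    have "LL (FM rcode_prod (frag_of a) (x - y)) - FM pcode_prod (Lr a) (LL (x - y))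
       = (LL (FM rcode_prod (frag_of a) x) - FM pcode_prod (Lr a) (LL x))
         - (LL (FM rcode_prod (frag_of a) y) - FM pcode_prod (Lr a) (LL y))"
      by (simp add: FM_diffr LL_diff algebra_simps)
    then show ?case using diff bz_rel.diff by simp
  qed
  have "LL (FM rcode_prod u v) - FM pcode_prod (LL u) (LL v) \<in> bz_rel"
    using subset_UNIV
  proof (induction u rule: frag_induction)
    case zero then show ?case by (simp add: LL_0 bz_rel.zero)
  next
    case (one a) show ?case using h[of a] by (simp add: LL_of)
  next
    case (diff x y)
    have "LL (FM rcode_prod (x - y) v) - FM pcode_prod (LL (x - y)) (LL v)
       = (LL (FM rcode_prod x v) - FM pcode_prod (LL x) (LL v))
         - (LL (FM rcode_prod y v) - FM pcode_prod (LL y) (LL v))"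
      by (simp add: FM_diffl LL_diff algebra_simps)
    then show ?case using diff bz_rel.diff by simp
  qed
  then show ?thesis by (simp add: free_mul_z_FM free_mul_r_FM)
qed

lemma rep_abs_bz: "bz_eq (rep_bz (abs_bz u)) u"
  by (rule Quotient3_rep_abs[OF Quotient3_bz]) simp
lemma rep_abs_br: "br_eq (rep_br (abs_br u)) u"
  by (rule Quotient3_rep_abs[OF Quotient3_br]) (simp add: br_eq_def br_rel.zero)

lemma abs_bz_add: "abs_bz u + abs_bz v = abs_bz (u + v)"
  unfolding plus_bz_def bz.abs_eq_iff by (rule bz_eq_add[OF rep_abs_bz rep_abs_bz])

lemma lam_add: "lamf (x + y) = lamf x + lamf y"
proof -
  have "bz_eq (LL (rep_br (abs_br (rep_br x + rep_br y)))) (LL (rep_br x + rep_br y))"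
    by (rule LL_eq[OF rep_abs_br])
  then show ?thesis unfolding lamf_def plus_br_def abs_bz_add bz.abs_eq_iff LL_add .
qed

lemma lam_mul: "lamf (x * y) = lamf x * lamf y"
proof -
  have "bz_eq (LL (rep_br (abs_br (free_mul_r (rep_br x) (rep_br y))))) (LL (free_mul_r (rep_br x) (rep_br y)))"
    by (rule LL_eq[OF rep_abs_br])
  moreover have "bz_eq (LL (free_mul_r (rep_br x) (rep_br y))) (free_mul_z (LL (rep_br x)) (LL (rep_br y)))"
    using LL_mul unfolding bz_eq_def .
  moreover have "bz_eq (free_mul_z (LL (rep_br x)) (LL (rep_br y)))
       (free_mul_z (rep_bz (abs_bz (LL (rep_br x)))) (rep_bz (abs_bz (LL (rep_br y)))))"
    by (rule bz_eq_mul[OF bz_eq_sym[OF rep_abs_bz] bz_eq_sym[OF rep_abs_bz]])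
  ultimately show ?thesis unfolding lamf_def times_br_def times_bz_def bz.abs_eq_iff
    using bz_eq_trans by metis
qed

lemma one_rack: "is_rack {0::nat} (\<lambda>a b. a)"
  unfolding is_rack_def by (auto simp: bij_betw_def)
lemma one_conn: "connected_rack {0::nat} (\<lambda>a b. a)"
  unfolding connected_rack_def using one_rack inn_orbit.base by auto

lemma lam_one: "lamf 1 = 1"
proof -
  have r: "Rep_rcode (Abs_rcode ({0}, \<lambda>a b. a)) = ({0}, \<lambda>a b. a)"
    by (rule Abs_rcode_inverse) (simp add: one_rack)
  have "bz_eq (LL (rep_br (abs_br (frag_of (Abs_rcode ({0}, \<lambda>a b. a))))))
               (LL (frag_of (Abs_rcode ({0::nat}, \<lambda>a b. a))))"
    by (rule LL_eq[OF rep_abs_br])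
  moreover have "LL (frag_of (Abs_rcode ({0::nat}, \<lambda>a b. a))) = pc {0} (\<lambda>b. 0)"
    unfolding LL_of Lr_rep[OF r] using Lam_conn[OF _ one_conn] by simp
  moreover have "pc {0} (\<lambda>b. 0) = frag_of (Abs_pcode ({0}, id))"
  proof -
    have "rs {0} (\<lambda>b. 0::nat) = id" by (auto simp: rs_def fun_eq_iff)
    then show ?thesis by (simp add: pc_def)
  qed
  ultimately show ?thesis
    unfolding lamf_def one_br_def one_bz_def b_rack_def b_perm_def bz.abs_eq_iff by simp
qed

lemma bz_nsmul_abs: "bz_nsmul k (abs_bz u) = abs_bz (frag_cmul (int k) u)"
proof (induction k)
  case 0 then show ?case by (simp add: bz_nsmul_def zero_bz_def)
next
  case (Suc k)
  have "bz_nsmul (Suc k) (abs_bz u) = abs_bz u + bz_nsmul k (abs_bz u)" by (simp add: bz_nsmul_def)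
  also have "\<dots> = abs_bz (u + frag_cmul (int k) u)" using Suc by (simp add: abs_bz_add)
  also have "u + frag_cmul (int k) u = frag_cmul (int (Suc k)) u" by (simp add: frag_cmul_distrib)
  finally show ?case .
qed

lemma bz_sum_abs: "bz_sum (\<lambda>n. abs_bz (g n)) N = abs_bz (\<Sum>n\<in>{1..N}. g n)"
proof (induction N)
  case 0 then show ?case by (simp add: zero_bz_def)
next
  case (Suc N)
  have "{1..Suc N} = insert (Suc N) {1..N}" by auto
  then show ?case using Suc by (simp add: abs_bz_add add.commute)
qed

lemma cyc_cc: "cyc n = abs_bz (cc n)"
  by (simp add: cyc_def b_perm_def cc_def cf_def)

lemma lam_conn: assumes "finite R" "connected_rack R op" "x \<in> R"
  shows "lamf (b_rack R op) = bz_sum (\<lambda>n. bz_nsmul (num_cycles n (op x) R) (cyc n)) (card R)"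
proof -
  have rR: "is_rack R op" using assms(2) unfolding connected_rack_def by simp
  have r: "Rep_rcode (Abs_rcode (R, op)) = (R, op)" by (rule Abs_rcode_inverse) (simp add: assms(1) rR)
  have e1: "bz_eq (LL (rep_br (abs_br (frag_of (Abs_rcode (R, op)))))) (Lam R op)"
    using LL_eq[OF rep_abs_br, of "frag_of (Abs_rcode (R, op))"] unfolding LL_of Lr_rep[OF r] .
  define m where "m = (SOME c. c \<in> R)"
  have m: "m \<in> R" using assms(3) m_def by (metis some_eq_ex)
  have "x \<in> inn_orbit R op m" using assms(2,3) m unfolding connected_rack_def by blast
  then have "perm_iso R (op m) R (op x)" by (rule conj[OF rR m])
  then have "pc R (op m) - pc R (op x) \<in> bz_rel" by (rule zrel_iso[OF assms(1,1) rack_bij[OF rR m] rack_bij[OF rR assms(3)]])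
  then have e2: "bz_eq (Lam R op) (pc R (op x))" using Lam_conn[OF assms(1,2)] m_def by (simp add: bz_eq_def)
  define \<sigma> where "\<sigma> = rs R (op x)"
  have bx: "bij_betw (op x) R R" by (rule rack_bij[OF rR assms(3)])
  have e3: "pc R (op x) = pc R \<sigma>" unfolding \<sigma>_def by (rule pc_cong) (simp add: rs_def)
  have ps: "\<sigma> permutes R" using rs_permutes[OF bx] \<sigma>_def by simp
  have perm: "permutation \<sigma>" using permutes_imp_permutation[OF assms(1) ps] .
  have img: "\<sigma> ` R = R" using permutes_image[OF ps] .
  have e4: "bz_eq (pc R \<sigma>) (\<Sum>k\<in>{1..card R}. frag_cmul (int (num_cycles k \<sigma> R)) (cc k))"
    by (rule cyc_decomp[OF assms(1) perm img]) simp
  have nc: "num_cycles k \<sigma> R = num_cycles k (op x) R" for k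
  proof -
    have "orbit \<sigma> z = orbit (op x) z" if "z \<in> R" for z
      by (rule orbit_cong0[OF that]) (use bx in \<open>auto simp: \<sigma>_def rs_def bij_betwE\<close>)
    then have "{C. \<exists>y\<in>R. C = orbit \<sigma> y \<and> card C = k} = {C. \<exists>y\<in>R. C = orbit (op x) y \<and> card C = k}"
      by auto
    then show ?thesis by (simp add: num_cycles_def)
  qed
  have rhs: "bz_sum (\<lambda>n. bz_nsmul (num_cycles n (op x) R) (cyc n)) (card R)
     = abs_bz (\<Sum>k\<in>{1..card R}. frag_cmul (int (num_cycles k \<sigma> R)) (cc k))"
    unfolding cyc_cc bz_nsmul_abs bz_sum_abs nc ..
  have "bz_eq (LL (rep_br (abs_br (frag_of (Abs_rcode (R, op))))))
              (\<Sum>k\<in>{1..card R}. frag_cmul (int (num_cycles k \<sigma> R)) (cc k))"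
    using e1 e2 e3 e4 bz_eq_trans by metis
  then show ?thesis unfolding rhs lamf_def b_rack_def bz.abs_eq_iff .
qed

theorem proposition6p7:
  shows "\<exists>lam :: br \<Rightarrow> bz.
    (\<forall>x y. lam (x + y) = lam x + lam y) \<and>
    (\<forall>x y. lam (x * y) = lam x * lam y) \<and>
    lam 1 = 1 \<and>
    (\<forall>(R :: nat set) op. finite R \<and> connected_rack R op \<longrightarrow>
       (\<forall>x\<in>R. lam (b_rack R op) =
          bz_sum (\<lambda>n. bz_nsmul (num_cycles n (op x) R) (cyc n)) (card R)))"
  by (rule exI[of _ lamf]) (auto simp: lam_add lam_mul lam_one lam_conn)


end
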